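(* Let $n\ge2$, $0\le l<k\le n$, $\theta\in(0,\pi)$ and $p>k-l+1$. Suppose $h$ is an admissible solution of $$\frac{\sigma_k(\nabla^2h+h\sigma)}{\sigma_l(\nabla^2h+h\sigma)}=\frac{\binom{n}{k}}{\binom{n}{l}}\left(\frac{h}{\ell}\right)^{p-1}\ \text{ in }\mathcal{C}_\theta,\qquad \nabla_\mu h=\cot\theta\, h\ \text{ on }\partial\mathcal{C}_\theta.$$ Then $h=\ell$.
   Context: Let $e=-E_{n+1}$, $E_1,\dots,E_{n+1}$ the standard basis of $\mathbb{R}^{n+1}$, $\overline{\mathbb{R}^{n+1}_+}=\{x_{n+1}\ge0\}$. $\mathcal{C}_\theta=\{\xi\in\overline{\mathbb{R}^{n+1}_+}:|\xi-\cos\theta\,e|=1\}$ with round metric $\sigma$, connection $\nabla$, unit outward conormal $\mu$ of $\partial\mathcal{C}_\theta$; $\ell(\xi)=\sin^2\theta+\cos\theta\langle\xi,e\rangle$. $\sigma_j(W)$ is the $j$-th elementary symmetric function of the eigenvalues of $W$ ($\sigma_0=1$); $\Gamma_k=\{\lambda\in\mathbb{R}^n:\sigma_i(\lambda)>0,1\le i\le k\}$; $h\in C^2(\mathcal{C}_\theta)$ is admissible if the eigenvalues of $\nabla^2h+h\sigma$ lie in $\Gamma_k$ everywhere. *)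

theory Defs
  imports "HOL-Analysis.Analysis"
begin

text \<open>Ambient space R^(n+1) is modelled as (real^'n) \<times> real, with n = CARD('n);
  the last factor is the coordinate x_(n+1).\<close>

type_synonym 'n pt = "(real^'n) \<times> real"

definition eN :: "('n::finite) pt" where
  "eN = (0, -1)"

definition cap :: "real \<Rightarrow> ('n::finite) pt set" where
  "cap \<theta> = {\<xi>. snd \<xi> \<ge> 0 \<and> norm (\<xi> - cos \<theta> *\<^sub>R eN) = 1}"

definition cap_boundary :: "real \<Rightarrow> ('n::finite) pt set" where
  "cap_boundary \<theta> = {\<xi> \<in> cap \<theta>. snd \<xi> = 0}"

definition ell :: "real \<Rightarrow> ('n::finite) pt \<Rightarrow> real" where
  "ell \<theta> \<xi> = (sin \<theta>)\<^sup>2 + cos \<theta> * (\<xi> \<bullet> eN)"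

definition cap_normal :: "real \<Rightarrow> ('n::finite) pt \<Rightarrow> ('n::finite) pt" where
  "cap_normal \<theta> \<xi> = \<xi> - cos \<theta> *\<^sub>R eN"

text \<open>Unit outward conormal of the boundary of the cap: the normalized tangential
  projection of e (pointing out of the half-space x_(n+1) \<ge> 0).\<close>
definition conormal :: "real \<Rightarrow> ('n::finite) pt \<Rightarrow> ('n::finite) pt" where
  "conormal \<theta> \<xi> =
     (let \<nu> = cap_normal \<theta> \<xi>; w = eN - (eN \<bullet> \<nu>) *\<^sub>R \<nu> in w /\<^sub>R norm w)"

text \<open>The bilinear form nabla^2 h + h sigma at a point of the sphere, computed from a
  C^2 extension h with gradient Dh and Hessian D2h (Gauss formula for the sphere).\<close>
definition Wform :: "real \<Rightarrow> (('n::finite) pt \<Rightarrow> real) \<Rightarrow> (('n::finite) pt \<Rightarrow> ('n::finite) pt) \<Rightarrow> (('n::finite) pt \<Rightarrow> ('n::finite) pt \<Rightarrow> ('n::finite) pt)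
                     \<Rightarrow> ('n::finite) pt \<Rightarrow> ('n::finite) pt \<Rightarrow> ('n::finite) pt \<Rightarrow> real" where
  "Wform \<theta> h Dh D2h \<xi> X Y =
     (D2h \<xi> X) \<bullet> Y - (Dh \<xi> \<bullet> cap_normal \<theta> \<xi>) * (X \<bullet> Y) + h \<xi> * (X \<bullet> Y)"

text \<open>lam (indexed by 'n, i.e. n values) are the eigenvalues (with multiplicity) of the form
  on the tangent space at \<xi>, w.r.t. the orthonormal eigenbasis b of that tangent space.\<close>
definition is_eigendecomp :: "real \<Rightarrow> (('n::finite) pt \<Rightarrow> real) \<Rightarrow> (('n::finite) pt \<Rightarrow> ('n::finite) pt) \<Rightarrow> (('n::finite) pt \<Rightarrow> ('n::finite) pt \<Rightarrow> ('n::finite) pt)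
                     \<Rightarrow> ('n::finite) pt \<Rightarrow> ('n \<Rightarrow> real) \<Rightarrow> ('n \<Rightarrow> ('n::finite) pt) \<Rightarrow> bool" where
  "is_eigendecomp \<theta> h Dh D2h \<xi> lam b \<longleftrightarrow>
     (\<forall>i j. b i \<bullet> b j = (if i = j then 1 else 0)) \<and>
     (\<forall>i. b i \<bullet> cap_normal \<theta> \<xi> = 0) \<and>
     (\<forall>i Y. Y \<bullet> cap_normal \<theta> \<xi> = 0 \<longrightarrow> Wform \<theta> h Dh D2h \<xi> (b i) Y = lam i * (b i \<bullet> Y))"

definition sigma :: "nat \<Rightarrow> ('n::finite \<Rightarrow> real) \<Rightarrow> real" where
  "sigma j lam = (\<Sum>S\<in>{S::'n set. card S = j}. \<Prod>i\<in>S. lam i)"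

definition Gamma :: "nat \<Rightarrow> ('n::finite \<Rightarrow> real) set" where
  "Gamma k = {lam. \<forall>i\<in>{1..k}. sigma i lam > 0}"

end

theory Submission
  imports Defs "HOL-Computational_Algebra.Polynomial"
begin

definition rr :: "real poly \<Rightarrow> bool" where
  "rr p \<longleftrightarrow> p \<noteq> 0 \<and> size (proots p) = degree p"

lemma rr_decomp:
  fixes p :: "real poly"
  assumes "p \<noteq> 0" "size (proots p) = degree p"
  shows "p = smult (lead_coeff p) (\<Prod>x\<in>#proots p. [:-x,1:])"
  using assms
proof (induction "degree p" arbitrary: p)
  case 0
  then have "proots p = {#}" by auto
  moreover from 0 have "p = [:coeff p 0:]" by (metis degree_0_id)
  ultimately show ?case using 0 by simp
next
  case (Suc n)
  then obtain a where a: "a \<in># proots p" by (metis size_empty nat.distinct(1) multiset_nonemptyE)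
  then have "poly p a = 0" using Suc by simp
  then obtain q where q: "p = [:-a,1:] * q" by (metis poly_eq_0_iff_dvd dvdE)
  have q0: "q \<noteq> 0" using Suc q by auto
  have "degree p = degree ([:-a,1:] :: real poly) + degree q" using q q0 by (metis degree_mult_eq pCons_eq_0_iff one_neq_zero)
  then have dq: "degree q = n" using Suc(2) by simp
  have l: "proots ([:-a,1:]::real poly) = {#a#}" using proots_linear_factor[of "-a"] by simp
  have l0: "([:-a,1:]::real poly) \<noteq> 0" by simp
  have pr: "proots p = {#a#} + proots q"
    using proots_mult[OF l0 q0] l q by simp
  have "size (proots q) = degree q" using Suc(4) pr dq Suc(2) by simp
  then have "q = smult (lead_coeff q) (\<Prod>x\<in>#proots q. [:-x,1:])" using Suc(1) dq q0 by blast
  moreover have "lead_coeff p = lead_coeff q" unfolding q lead_coeff_mult by simp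
  ultimately show ?case using q pr by (metis mult_smult_right prod_mset.insert add_mset_add_single add.commute)
qed

lemma rolle_count:
  fixes p :: "real poly"
  assumes "finite R" "\<forall>x\<in>R. poly p x = 0"
  shows "\<exists>Z. finite Z \<and> card Z + 1 \<ge> card R \<and> Z \<inter> R = {} \<and> (\<forall>z\<in>Z. poly (pderiv p) z = 0)
             \<and> (\<forall>z\<in>Z. \<exists>a\<in>R. z < a)"
  using assms
proof (induction R rule: finite_linorder_max_induct)
  case empty
  then show ?case by (intro exI[of _ "{}"]) auto
next
  case (insert b A)
  show ?case
  proof (cases "A = {}")
    case True
    then show ?thesis by (intro exI[of _ "{}"]) auto
  next
    case False
    define M where "M = Max A"
    have MA: "M \<in> A" "\<forall>a\<in>A. a \<le> M" using False insert(1) M_def by auto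
    have Mb: "M < b" using MA insert(2) by auto
    obtain z where z: "M < z" "z < b" "poly p b - poly p M = (b - M) * poly (pderiv p) z"
      using poly_MVT[OF Mb] by blast
    have pz: "poly (pderiv p) z = 0" using z insert(4) MA Mb by auto
    obtain Z where Z: "finite Z" "card Z + 1 \<ge> card A" "Z \<inter> A = {}" "\<forall>z\<in>Z. poly (pderiv p) z = 0"
      "\<forall>z\<in>Z. \<exists>a\<in>A. z < a" using insert by auto
    have zZ: "z \<notin> Z" using Z(5) MA z(1) by force
    have bZ: "b \<notin> Z" using Z(5) MA Mb by force
    have zA: "z \<notin> A" using MA z(1) by force
    show ?thesis
      apply (intro exI[of _ "insert z Z"])
      using Z zZ bZ zA z pz insert(1,2) by (auto simp: card_insert_if)
  qed
qed

lemma rr_pderiv: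
  assumes "rr p" "degree p \<ge> 1"
  shows "rr (pderiv p)"
proof -
  have p0: "p \<noteq> 0" and sz: "size (proots p) = degree p" using assms unfolding rr_def by auto
  define R where "R = set_mset (proots p)"
  have fR: "finite R" unfolding R_def by simp
  have Rroot: "\<forall>x\<in>R. poly p x = 0" unfolding R_def using p0 by simp
  have Rne: "R \<noteq> {}" unfolding R_def using sz assms(2) by auto
  obtain Z where Z: "finite Z" "card Z + 1 \<ge> card R" "Z \<inter> R = {}" "\<forall>z\<in>Z. poly (pderiv p) z = 0"
    using rolle_count[OF fR Rroot] by blast
  have dp: "degree (pderiv p) = degree p - 1" by (rule degree_pderiv)
  have q0: "pderiv p \<noteq> 0" using assms(2) dp
    by (metis One_nat_def degree_0 diff_is_0_eq le_antisym pderiv_eq_0_iff zero_neq_one p0 le_numeral_extra(4))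
  have ordR: "order x p = Suc (order x (pderiv p))" if "x \<in> R" for x
    using order_pderiv[OF p0] Rroot that by blast
  have s1: "size (proots p) = (\<Sum>x\<in>R. order x p)"
    unfolding R_def using p0 by (simp add: size_multiset_overloaded_eq)
  have "(\<Sum>x\<in>R. order x p) = (\<Sum>x\<in>R. order x (pderiv p) + 1)" by (rule sum.cong) (auto simp: ordR)
  also have "\<dots> = (\<Sum>x\<in>R. order x (pderiv p)) + card R" by (simp add: sum_Suc)
  finally have s2: "(\<Sum>x\<in>R. order x p) = (\<Sum>x\<in>R. order x (pderiv p)) + card R" .
  have s3: "card Z \<le> (\<Sum>x\<in>Z. order x (pderiv p))"
  proof -
    have "(\<Sum>x\<in>Z. (1::nat)) \<le> (\<Sum>x\<in>Z. order x (pderiv p))"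
      apply (rule sum_mono) using Z(4) q0 by (simp add: order_root Suc_le_eq)
    then show ?thesis by simp
  qed
  define S where "S = R \<union> Z \<union> set_mset (proots (pderiv p))"
  have fS: "finite S" unfolding S_def using fR Z(1) by simp
  have s4: "size (proots (pderiv p)) = (\<Sum>x\<in>S. order x (pderiv p))"
  proof -
    have "size (proots (pderiv p)) = (\<Sum>x\<in>set_mset (proots (pderiv p)). order x (pderiv p))"
      using q0 by (simp add: size_multiset_overloaded_eq)
    also have "\<dots> = (\<Sum>x\<in>S. order x (pderiv p))"
      apply (rule sum.mono_neutral_left) using fS q0 by (auto simp: S_def order_root)
    finally show ?thesis .
  qed
  have s5: "(\<Sum>x\<in>R \<union> Z. order x (pderiv p)) \<le> (\<Sum>x\<in>S. order x (pderiv p))"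
    apply (rule sum_mono2) using fS by (auto simp: S_def)
  have s6: "(\<Sum>x\<in>R \<union> Z. order x (pderiv p)) = (\<Sum>x\<in>R. order x (pderiv p)) + (\<Sum>x\<in>Z. order x (pderiv p))"
    using Z(1,3) fR by (simp add: sum.union_disjoint Int_commute)
  have "size (proots (pderiv p)) \<ge> degree (pderiv p)"
    using s1 s2 s3 s4 s5 s6 sz dp Z(2) by linarith
  then have "size (proots (pderiv p)) = degree (pderiv p)" using size_proots_le le_antisym by blast
  then show ?thesis using q0 unfolding rr_def by simp
qed

lemma lin_nz: "(\<Prod>x\<in>#B. [:-x,1:]) \<noteq> (0::real poly)"
proof (induction B)
  case empty then show ?case by simp
next
  case (add x B)
  have nz: "[:-x,1:] \<noteq> (0::real poly)" by simp
  have e: "(\<Prod>x\<in>#add_mset x B. [:-x,1:]) = [:-x,1:] * (\<Prod>x\<in>#B. [:-x,1:])"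
    by (simp only: image_mset_add_mset prod_mset.add_mset)
  show ?case unfolding e by (rule no_zero_divisors[OF nz add.IH])
qed

lemma proots_lin: "proots (\<Prod>x\<in>#B. [:-x,1:]) = (B :: real multiset)"
proof (induction B)
  case empty then show ?case by simp
next
  case (add x B)
  have l: "proots ([:-x,1:]::real poly) = {#x#}" using proots_linear_factor[of "-x"] by simp
  have l0: "([:-x,1:]::real poly) \<noteq> 0" by simp
  have n0: "(\<Prod>x\<in>#B. [:-x,1:]) \<noteq> (0::real poly)" by (rule lin_nz)
  show ?case using proots_mult[OF l0 n0] l add by simp
qed

lemma degree_lin: "degree (\<Prod>x\<in>#B. [:-x,1:]) = size (B :: real multiset)"
proof (induction B)
  case empty then show ?case by simp
next
  case (add x B)
  have l0: "([:-x,1:]::real poly) \<noteq> 0" by simp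
  have n0: "(\<Prod>x\<in>#B. [:-x,1:]) \<noteq> (0::real poly)" by (rule lin_nz)
  show ?case using degree_mult_eq[OF l0 n0] add by simp
qed

lemma rr_lin: "c \<noteq> 0 \<Longrightarrow> rr (smult c (\<Prod>x\<in>#B. [:-x,1:]))"
  unfolding rr_def using lin_nz by (simp add: proots_lin degree_lin)

lemma rr_higher_pderiv:
  assumes "rr p" "m \<le> degree p"
  shows "rr ((pderiv ^^ m) p)"
  using assms(2)
proof (induction m)
  case 0 then show ?case using assms(1) by simp
next
  case (Suc m)
  have "degree ((pderiv ^^ m) p) \<ge> 1" using Suc(2) by (simp add: degree_higher_pderiv)
  then show ?case using Suc rr_pderiv by simp
qed

lemma reflect_lin:
  assumes "0 \<notin># (B :: real multiset)"
  shows "reflect_poly (\<Prod>x\<in>#B. [:-x,1:]) = smult (\<Prod>x\<in>#B. -x) (\<Prod>x\<in>#B. [:-1/x,1:])"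
  using assms
proof (induction B)
  case empty then show ?case by simp
next
  case (add x B)
  have x0: "x \<noteq> 0" using add by auto
  have IH: "reflect_poly (\<Prod>x\<in>#B. [:-x,1:]) = smult (\<Prod>x\<in>#B. -x) (\<Prod>x\<in>#B. [:-1/x,1:])"
    using add by auto
  have xx: "-x * (-1/x) = (1::real)" using x0 by simp
  have "reflect_poly ([:-x,1:]) = [:1,-x:]" using x0 by (simp add: reflect_poly_pCons)
  also have "[:1,-x:] = smult (-x) [:-1/x,1:]" using xx by simp
  finally have r: "reflect_poly ([:-x,1:]) = smult (-x) [:-1/x,1:]" .
  have "reflect_poly (\<Prod>x\<in>#add_mset x B. [:-x,1:]) = reflect_poly [:-x,1:] * reflect_poly (\<Prod>x\<in>#B. [:-x,1:])"
    by (simp only: image_mset_add_mset prod_mset.add_mset reflect_poly_mult)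
  also have "\<dots> = smult (-x) [:-1/x,1:] * smult (\<Prod>x\<in>#B. -x) (\<Prod>x\<in>#B. [:-1/x,1:])" using r IH by (simp only:)
  also have "\<dots> = smult (\<Prod>x\<in>#add_mset x B. -x) (\<Prod>x\<in>#add_mset x B. [:-1/x,1:])"
    by (simp only: image_mset_add_mset prod_mset.add_mset mult_smult_left mult_smult_right smult_smult mult.commute)
  finally show ?case .
qed

lemma prod_neg_nz: "0 \<notin># B \<Longrightarrow> (\<Prod>x\<in>#B. -x) \<noteq> (0::real)"
  by (induction B) auto

lemma rr_reflect:
  assumes "rr p" "coeff p 0 \<noteq> 0"
  shows "rr (reflect_poly p)"
proof -
  have p0: "p \<noteq> 0" and sz: "size (proots p) = degree p" using assms unfolding rr_def by auto
  have dec: "p = smult (lead_coeff p) (\<Prod>x\<in>#proots p. [:-x,1:])" using rr_decomp[OF p0 sz] .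
  have "0 \<notin># proots p" using p0 assms(2) by (simp add: poly_0_coeff_0)
  then have "reflect_poly p = smult (lead_coeff p * (\<Prod>x\<in>#proots p. -x)) (\<Prod>x\<in>#image_mset (\<lambda>x. 1/x) (proots p). [:-x,1:])"
    apply (subst dec) by (simp add: reflect_poly_smult reflect_lin image_mset.compositionality o_def)
  moreover have c0: "lead_coeff p * (\<Prod>x\<in>#proots p. -x) \<noteq> 0" using p0 prod_neg_nz[OF \<open>0 \<notin># proots p\<close>]
    by simp
  ultimately show ?thesis using rr_lin[OF c0] by simp
qed

lemma rr_quad:
  assumes "rr q" "degree q = 2"
  shows "4 * coeff q 0 * coeff q 2 \<le> (coeff q 1)^2"
proof -
  have p0: "q \<noteq> 0" and sz: "size (proots q) = degree q" using assms unfolding rr_def by auto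
  have dec: "q = smult (lead_coeff q) (\<Prod>x\<in>#proots q. [:-x,1:])" using rr_decomp[OF p0 sz] .
  obtain r A where A: "proots q = add_mset r A" using sz assms(2)
    by (metis multiset_cases size_empty zero_neq_numeral)
  then have "size A = 1" using sz assms(2) by simp
  then obtain s where "A = {#s#}" using size_1_singleton_mset by blast
  then have q: "q = smult (lead_coeff q) ([:-r,1:] * [:-s,1:])" using dec A by simp
  define c where "c = lead_coeff q"
  have "coeff q 0 = c * r * s" "coeff q 1 = - c * (r + s)" "coeff q 2 = c"
    by (subst q; simp add: c_def[symmetric] algebra_simps numeral_2_eq_2)+
  moreover have "4 * (c * r * s) * c \<le> (- c * (r + s))^2"
  proof -
    have "(- c * (r + s))^2 - 4 * (c * r * s) * c = (c * (r - s))^2" by (simp add: power2_eq_square algebra_simps)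
    then show ?thesis by (smt (verit) zero_le_power2)
  qed
  ultimately show ?thesis by simp
qed

lemma poch2: "pochhammer (2::real) k = fact (Suc k)"
  using pochhammer_rec[of "1::real" k] pochhammer_fact[of "Suc k", where 'a=real] by simp

lemma poch3: "pochhammer (3::real) k = fact (Suc (Suc k)) / 2"
proof -
  have "pochhammer (2::real) (Suc k) = 2 * pochhammer 3 k" using pochhammer_rec[of "2::real" k] by simp
  then show ?thesis using poch2[of "Suc k"] by simp
qed

lemma chp0: "coeff ((pderiv ^^ m) f) 0 = fact m * coeff (f::real poly) m"
  using coeff_higher_pderiv[of m f 0] by (simp add: pochhammer_fact)
lemma chp1: "coeff ((pderiv ^^ m) f) 1 = fact (Suc m) * coeff (f::real poly) (Suc m)"
  using coeff_higher_pderiv[of m f 1] by (simp add: poch2)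
lemma chp2: "coeff ((pderiv ^^ m) f) 2 = fact (Suc (Suc m)) / 2 * coeff (f::real poly) (Suc (Suc m))"
  using coeff_higher_pderiv[of m f 2] by (simp add: poch3 numeral_3_eq_3 numeral_2_eq_2)

lemma newton_poly:
  assumes "rr p" "degree p = N" "1 \<le> i" "i < N"
  shows "real (N - i + 1) * real (i + 1) * (coeff p (i - 1) * coeff p (i + 1))
           \<le> real i * real (N - i) * (coeff p i)^2"
proof (cases "coeff p (i - 1) = 0")
  case True
  then show ?thesis by simp
next
  case False
  define k where "k = i - 1"
  have ik: "i = Suc k" using assms(3) k_def by simp
  define q where "q = (pderiv ^^ k) p"
  define D where "D = N - k"
  have dq: "degree q = D" unfolding q_def D_def using assms(2) by (simp add: degree_higher_pderiv)
  have D2: "D \<ge> 2" using assms ik D_def by simp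
  have rq: "rr q" unfolding q_def using rr_higher_pderiv[OF assms(1)] assms ik by simp
  have c0: "coeff q 0 = fact k * coeff p (i - 1)" unfolding q_def chp0 k_def ..
  have c1: "coeff q 1 = fact i * coeff p i" unfolding q_def chp1 ik by simp
  have c2: "coeff q 2 = fact (Suc i) / 2 * coeff p (i + 1)" unfolding q_def chp2 ik by simp
  have q0: "coeff q 0 \<noteq> 0" using c0 False by simp
  define r where "r = reflect_poly q"
  have rr': "rr r" unfolding r_def using rr_reflect[OF rq q0] .
  have dr: "degree r = D" unfolding r_def using q0 dq by simp
  define s where "s = (pderiv ^^ (D - 2)) r"
  have rs: "rr s" unfolding s_def using rr_higher_pderiv[OF rr'] dr by simp
  have ds: "degree s = 2" unfolding s_def using dr D2 by (simp add: degree_higher_pderiv)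
  define E where "E = (fact (D - 2) :: real)"
  have Epos: "E > 0" unfolding E_def by simp
  have s0: "coeff s 0 = E * coeff q 2" unfolding s_def chp0 E_def r_def coeff_reflect_poly dq
    using D2 by simp
  have s1: "coeff s 1 = (real D - 1) * E * coeff q 1" unfolding s_def chp1 E_def r_def coeff_reflect_poly dq
    using D2 by (simp add: Suc_diff_le fact_Suc of_nat_diff)
  have s2: "coeff s 2 = real D * (real D - 1) / 2 * E * coeff q 0"
  proof -
    have "coeff s 2 = fact (Suc (Suc (D - 2))) / 2 * coeff q 0"
      unfolding s_def chp2 r_def coeff_reflect_poly dq using D2 by simp
    moreover have "Suc (Suc (D - 2)) = D" using D2 by simp
    moreover have "(fact D :: real) = real D * (real D - 1) * E"
    proof -
      obtain m where m: "D = Suc (Suc m)" using D2 by (metis add_2_eq_Suc le_Suc_ex)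
      show ?thesis unfolding E_def m by (simp add: fact_Suc algebra_simps)
    qed
    ultimately show ?thesis by simp
  qed
  have key: "4 * coeff s 0 * coeff s 2 \<le> (coeff s 1)^2" using rr_quad[OF rs ds] .
  define F where "F = (fact k :: real)"
  have Fpos: "F > 0" unfolding F_def by simp
  have fi: "(fact i :: real) = real i * F" unfolding F_def ik by (simp add: fact_Suc)
  have fi1: "(fact (Suc i) :: real) = real (i + 1) * real i * F" unfolding F_def ik by (simp add: fact_Suc algebra_simps)
  define a0 where "a0 = coeff p (i - 1)"
  define a1 where "a1 = coeff p i"
  define a2 where "a2 = coeff p (i + 1)"
  have K: "4 * (E * (real (i + 1) * real i * F / 2 * a2)) * (real D * (real D - 1) / 2 * E * (F * a0))
        \<le> ((real D - 1) * E * (real i * F * a1))^2"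
    using key unfolding s0 s1 s2 c0 c1 c2 fi fi1 a0_def a1_def a2_def F_def by simp
  then have "(E * E * F * F * real i * (real D - 1)) * (real D * real (i + 1) * a0 * a2)
        \<le> (E * E * F * F * real i * (real D - 1)) * ((real D - 1) * real i * a1^2)"
  proof -
    have e1: "4 * (E * (real (i + 1) * real i * F / 2 * a2)) * (real D * (real D - 1) / 2 * E * (F * a0))
       = (E * E * F * F * real i * (real D - 1)) * (real D * real (i + 1) * a0 * a2)"
      by (simp add: field_simps)
    have e2: "((real D - 1) * E * (real i * F * a1))^2 = (E * E * F * F * real i * (real D - 1)) * ((real D - 1) * real i * a1^2)"
      by (simp add: power2_eq_square field_simps)
    show ?thesis using K unfolding e1 e2 .
  qed
  moreover have "E * E * F * F * real i * (real D - 1) > 0" using Epos Fpos D2 assms(3) by simp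
  ultimately have "real D * real (i + 1) * a0 * a2 \<le> (real D - 1) * real i * a1^2"
    by (simp add: mult_le_cancel_left_pos)
  moreover have "real D = real (N - i + 1)" "real D - 1 = real (N - i)" unfolding D_def using ik assms by auto
  ultimately show ?thesis unfolding a0_def a1_def a2_def by (simp add: algebra_simps)
qed

definition esym :: "'a set \<Rightarrow> ('a \<Rightarrow> real) \<Rightarrow> nat \<Rightarrow> real" where
  "esym I lam j = (\<Sum>S\<in>{S. S \<subseteq> I \<and> card S = j}. \<Prod>i\<in>S. lam i)"

lemma esym_0: "finite I \<Longrightarrow> esym I lam 0 = 1"
proof -
  assume "finite I"
  then have "{S. S \<subseteq> I \<and> card S = 0} = {{}}"
    using finite_subset[of _ I] by (auto simp: card_eq_0_iff)
  then show ?thesis unfolding esym_def by simp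
qed

lemma esym_empty_Suc: "esym {} lam (Suc j) = 0"
  unfolding esym_def by simp

lemma esym_insert:
  assumes "finite I" "x \<notin> I"
  shows "esym (insert x I) lam (Suc j) = esym I lam (Suc j) + lam x * esym I lam j"
proof -
  let ?A = "{S. S \<subseteq> I \<and> card S = Suc j}"
  let ?B = "{S. S \<subseteq> I \<and> card S = j}"
  have fin: "finite {S. S \<subseteq> insert x I}" using assms by simp
  have split: "{S. S \<subseteq> insert x I \<and> card S = Suc j} = ?A \<union> insert x ` ?B"
  proof (rule set_eqI, rule iffI)
    fix S assume S: "S \<in> {S. S \<subseteq> insert x I \<and> card S = Suc j}"
    show "S \<in> ?A \<union> insert x ` ?B"
    proof (cases "x \<in> S")
      case True
      have fS: "finite S" using S assms finite_subset by auto
      have "S - {x} \<in> ?B" using S True fS by auto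
      moreover have "S = insert x (S - {x})" using True by auto
      ultimately show ?thesis by blast
    next
      case False then show ?thesis using S by auto
    qed
  next
    fix S assume "S \<in> ?A \<union> insert x ` ?B"
    then show "S \<in> {S. S \<subseteq> insert x I \<and> card S = Suc j}"
    proof
      assume "S \<in> ?A" then show ?thesis by auto
    next
      assume "S \<in> insert x ` ?B"
      then obtain T where T: "T \<in> ?B" "S = insert x T" by blast
      have "finite T" using T assms finite_subset by auto
      moreover have "x \<notin> T" using T assms by auto
      ultimately show ?thesis using T by auto
    qed
  qed
  have disj: "?A \<inter> insert x ` ?B = {}" using assms by auto
  have inj: "inj_on (insert x) ?B"
    by (rule inj_onI) (use assms in \<open>auto simp: insert_ident\<close>)
  have fA: "finite ?A" "finite (insert x ` ?B)" using assms by auto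
  have "esym (insert x I) lam (Suc j) = (\<Sum>S\<in>?A. \<Prod>i\<in>S. lam i) + (\<Sum>S\<in>insert x ` ?B. \<Prod>i\<in>S. lam i)"
    unfolding esym_def split by (rule sum.union_disjoint[OF fA disj])
  also have "(\<Sum>S\<in>insert x ` ?B. \<Prod>i\<in>S. lam i) = (\<Sum>T\<in>?B. \<Prod>i\<in>insert x T. lam i)"
    by (rule sum.reindex[OF inj, unfolded o_def])
  also have "\<dots> = (\<Sum>T\<in>?B. lam x * (\<Prod>i\<in>T. lam i))"
  proof (rule sum.cong[OF refl])
    fix T assume T: "T \<in> ?B"
    have "finite T" using T assms finite_subset by auto
    moreover have "x \<notin> T" using T assms by auto
    ultimately show "(\<Prod>i\<in>insert x T. lam i) = lam x * (\<Prod>i\<in>T. lam i)" by simp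
  qed
  finally show ?thesis unfolding esym_def by (simp add: sum_distrib_left)
qed

lemma coeff_prod_rev:
  assumes "finite I"
  shows "coeff (\<Prod>i\<in>I. [:1, lam i:]) j = esym I lam j"
  using assms
proof (induction I arbitrary: j rule: finite_induct)
  case empty
  then show ?case by (cases j) (auto simp: esym_0 esym_empty_Suc)
next
  case (insert x I)
  have e: "(\<Prod>i\<in>insert x I. [:1, lam i:]) = (\<Prod>i\<in>I. [:1, lam i:]) + pCons 0 (smult (lam x) (\<Prod>i\<in>I. [:1, lam i:]))"
    using insert by simp
  show ?case
  proof (cases j)
    case 0
    then show ?thesis using insert by (simp add: e esym_0)
  next
    case (Suc m)
    then show ?thesis unfolding e using insert by (simp add: esym_insert)
  qed
qed

lemma reflect_lin1: "reflect_poly [:a, 1:] = [:1, a::real:]"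
  by (rule poly_eqI) (simp add: coeff_reflect_poly coeff_pCons split: nat.split)

definition Pl :: "('n::finite \<Rightarrow> real) \<Rightarrow> real poly" where
  "Pl lam = (\<Prod>i\<in>UNIV. [:lam i, 1:])"

lemma Pl_lin: "Pl lam = (\<Prod>x\<in>#image_mset (\<lambda>i. - lam i) (mset_set UNIV). [:-x,1:])"
  unfolding Pl_def prod_unfold_prod_mset image_mset.compositionality o_def by simp

lemma Pl_rr: "rr (Pl lam)"
  using rr_lin[of 1] unfolding Pl_lin by simp

lemma Pl_degree: "degree (Pl (lam :: 'n::finite \<Rightarrow> real)) = CARD('n)"
  unfolding Pl_lin degree_lin by simp

lemma sigma_esym: "sigma j lam = esym UNIV lam j"
  unfolding sigma_def esym_def by simp

lemma Pl_coeff: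
  assumes "j \<le> CARD('n)"
  shows "coeff (Pl (lam :: 'n::finite \<Rightarrow> real)) (CARD('n) - j) = sigma j lam"
proof -
  have "reflect_poly (Pl lam) = (\<Prod>i\<in>UNIV. [:1, lam i:])"
    unfolding Pl_def reflect_poly_prod reflect_lin1 ..
  then have "coeff (reflect_poly (Pl lam)) j = sigma j lam"
    by (simp add: coeff_prod_rev sigma_esym)
  then show ?thesis using assms by (simp add: coeff_reflect_poly Pl_degree)
qed

lemma sigma_newton:
  fixes lam :: "'n::finite \<Rightarrow> real"
  assumes "1 \<le> j" "j < CARD('n)"
  shows "real (j + 1) * real (CARD('n) - j + 1) * (sigma (j + 1) lam * sigma (j - 1) lam)
           \<le> real j * real (CARD('n) - j) * (sigma j lam)^2"
proof -
  define n where "n = CARD('n)"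
  define i where "i = n - j"
  have i1: "1 \<le> i" "i < n" using assms unfolding i_def n_def by auto
  have N: "real (n - i + 1) * real (i + 1) * (coeff (Pl lam) (i - 1) * coeff (Pl lam) (i + 1))
           \<le> real i * real (n - i) * (coeff (Pl lam) i)^2"
    using newton_poly[OF Pl_rr Pl_degree[of lam, folded n_def] i1] .
  have a: "coeff (Pl lam) (i - 1) = sigma (j + 1) lam"
    using Pl_coeff[of "j+1" lam] assms unfolding i_def n_def by (simp add: Suc_diff_Suc diff_diff_add)
  have e1: "n - (j - 1) = i + 1" using assms unfolding i_def n_def by simp
  have b: "coeff (Pl lam) (i + 1) = sigma (j - 1) lam"
    using Pl_coeff[of "j-1" lam] assms e1 unfolding n_def by simp
  have c: "coeff (Pl lam) i = sigma j lam"
    using Pl_coeff[of j lam] assms unfolding i_def n_def by simp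
  have d: "n - i + 1 = j + 1" "n - i = j" using assms unfolding i_def n_def by auto
  have N': "real (j + 1) * real (i + 1) * (sigma (j + 1) lam * sigma (j - 1) lam)
           \<le> real i * real j * (sigma j lam)^2" using N unfolding a b c d .
  have ii: "i + 1 = CARD('n) - j + 1" "i = CARD('n) - j" unfolding i_def n_def using assms by auto
  show ?thesis using N' unfolding ii by (simp only: mult.commute[of "real (CARD('n) - j)" "real j"])
qed

lemma esym_1: "finite I \<Longrightarrow> esym I lam 1 = sum lam I"
proof (induction I rule: finite_induct)
  case empty then show ?case using esym_empty_Suc[of lam 0] by simp
next
  case (insert x I) then show ?case using esym_insert[of I x lam 0] by (simp add: esym_0)
qed

lemma sigma_0: "sigma 0 (lam :: 'n::finite \<Rightarrow> real) = 1"
  unfolding sigma_esym by (simp add: esym_0)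

lemma sigma_1: "sigma 1 (lam :: 'n::finite \<Rightarrow> real) = (\<Sum>i\<in>UNIV. lam i)"
  unfolding sigma_esym using esym_1[of UNIV lam] by simp

lemma binom_step: "real (Suc j) * real (n choose Suc j) = real (n - j) * real (n choose j)"
proof (cases n)
  case 0 then show ?thesis by simp
next
  case (Suc m)
  have "Suc j * (Suc m choose Suc j) = Suc m * (m choose j)" by (rule Suc_times_binomial)
  moreover have "(Suc m - j) * (Suc m choose j) = Suc m * (m choose j)"
    using binomial_absorb_comp[of "Suc m" j] by simp
  ultimately have "Suc j * (n choose Suc j) = (n - j) * (n choose j)" using Suc by simp
  then show ?thesis by (metis of_nat_mult)
qed

lemma newton_S:
  fixes lam :: "'n::finite \<Rightarrow> real"
  assumes "j + 2 \<le> CARD('n)"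
  shows "(sigma (j+2) lam / real (CARD('n) choose (j+2))) * (sigma j lam / real (CARD('n) choose j))
         \<le> (sigma (j+1) lam / real (CARD('n) choose (j+1)))^2"
proof -
  define n where "n = CARD('n)"
  define C0 C1 C2 where "C0 = real (n choose j)" "C1 = real (n choose (j+1))" "C2 = real (n choose (j+2))"
  have pos: "C0 > 0" "C1 > 0" "C2 > 0" using assms unfolding C0_C1_C2_def n_def by auto
  have N: "real (j + 2) * real (n - (j+1) + 1) * (sigma (j + 2) lam * sigma j lam)
           \<le> real (j+1) * real (n - (j+1)) * (sigma (j+1) lam)^2"
    using sigma_newton[of "j+1" lam] assms unfolding n_def by simp
  have b1: "real (j+1) * C1 = real (n - j) * C0" unfolding C0_C1_C2_def using binom_step[of j n] by simp
  have b2: "real (j+2) * C2 = real (n - (j+1)) * C1" unfolding C0_C1_C2_def using binom_step[of "j+1" n] by simp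
  have e: "n - (j+1) + 1 = n - j" using assms unfolding n_def by simp
  have m: "real (n - (j+1)) > 0" using assms unfolding n_def by simp
  define a b c where "a = sigma (j+2) lam" "b = sigma j lam" "c = sigma (j+1) lam"
  have N': "(real (j + 2) * C2) * (real (n - j) * C0) * (a * b) \<le> real (j+1) * real (n - (j+1)) * c^2 * (C2 * C0)"
  proof -
    have "real (j + 2) * real (n - j) * (a * b) * (C2 * C0) \<le> real (j+1) * real (n - (j+1)) * c^2 * (C2 * C0)"
      using N pos unfolding e a_b_c_def by (intro mult_right_mono) auto
    then show ?thesis by (simp add: algebra_simps)
  qed
  then have "(real (n - (j+1)) * C1) * (real (j+1) * C1) * (a * b) \<le> real (j+1) * real (n - (j+1)) * c^2 * (C2 * C0)"
    unfolding b2 b1[symmetric] .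
  then have "(real (n - (j+1)) * real (j+1)) * (C1 * C1 * (a * b)) \<le> (real (n - (j+1)) * real (j+1)) * (c^2 * (C2 * C0))"
    by (simp add: algebra_simps)
  then have "C1 * C1 * (a * b) \<le> c^2 * (C2 * C0)" using m by (simp add: mult_le_cancel_left_pos)
  then have "(a / C2) * (b / C0) \<le> (c / C1)^2" using pos by (simp add: field_simps power2_eq_square)
  then show ?thesis unfolding a_b_c_def C0_C1_C2_def n_def .
qed

lemma claimB:
  fixes lam :: "'n::finite \<Rightarrow> real"
  assumes kn: "k \<le> CARD('n)" and lk: "l \<le> k" and pos: "\<forall>j\<in>{1..k}. sigma j lam > 0"
    and le: "\<forall>i. lam i \<le> u" and u: "u > 0"
  shows "real (CARD('n) choose l) * sigma k lam \<le> real (CARD('n) choose k) * u^(k - l) * sigma l lam"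
proof -
  define n where "n = CARD('n)"
  define S where "S j = sigma j lam / real (n choose j)" for j
  have pos0: "sigma j lam > 0" if "j \<le> k" for j
    using pos that sigma_0[of lam] by (cases "j = 0") auto
  have Cpos: "real (n choose j) > 0" if "j \<le> k" for j using that kn unfolding n_def by simp
  have Spos: "S j > 0" if "j \<le> k" for j using pos0[OF that] Cpos[OF that] unfolding S_def by simp
  have step: "S (j+1) \<le> u * S j" if "j + 1 \<le> k" for j
    using that
  proof (induction j)
    case 0
    have "sigma 1 lam \<le> real n * u"
      unfolding sigma_1 n_def using le sum_bounded_above[of UNIV lam u] by simp
    then show ?case unfolding S_def using kn 0 unfolding n_def by (simp add: field_simps sigma_0)
  next
    case (Suc j)
    have IH: "S (j+1) \<le> u * S j" using Suc by simp
    have Nw: "S (j+2) * S j \<le> (S (j+1))^2"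
      using newton_S[of j lam] Suc kn unfolding S_def n_def by simp
    have p1: "S (j+1) > 0" "S j > 0" "S (j+2) > 0" using Spos Suc by auto
    have "S (j+2) * S j \<le> S (j+1) * (u * S j)"
      using Nw IH p1 by (smt (verit, ccfv_SIG) mult_left_mono power2_eq_square)
    then have "S (j+2) * S j \<le> (u * S (j+1)) * S j" by (simp add: algebra_simps)
    then have "S (j+2) \<le> u * S (j+1)" using p1 by (simp add: mult_le_cancel_right_pos)
    then show ?case by simp
  qed
  have chain: "S m \<le> u^(m - l) * S l" if "l \<le> m" "m \<le> k" for m
    using that
  proof (induction m)
    case 0 then show ?case by simp
  next
    case (Suc m)
    show ?case
    proof (cases "l = Suc m")
      case True then show ?thesis by simp
    next
      case False
      then have lm: "l \<le> m" using Suc by simp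
      have "S (Suc m) \<le> u * S m" using step[of m] Suc by simp
      also have "\<dots> \<le> u * (u^(m - l) * S l)" using Suc lm u by (intro mult_left_mono) auto
      also have "\<dots> = u^(Suc m - l) * S l" using lm by (simp add: Suc_diff_le)
      finally show ?thesis .
    qed
  qed
  have "S k \<le> u^(k - l) * S l" using chain[OF lk] by simp
  then have "sigma k lam / real (n choose k) \<le> u^(k-l) * (sigma l lam / real (n choose l))" unfolding S_def .
  then show ?thesis using Cpos[of k] Cpos[of l] lk unfolding n_def by (simp add: field_simps)
qed

lemma sigma_pos:
  fixes lam :: "'n::finite \<Rightarrow> real"
  assumes "\<forall>i. lam i > 0" "j \<le> CARD('n)"
  shows "sigma j lam > 0"
proof -
  obtain S :: "'n set" where "card S = j" using obtain_subset_with_card_n[of j UNIV] assms(2) by auto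
  then have ne: "{S::'n set. card S = j} \<noteq> {}" by auto
  show ?thesis unfolding sigma_def
    by (rule sum_pos) (use ne assms(1) in \<open>auto intro: prod_pos\<close>)
qed

lemma card_compl: "card (- (S::'n::finite set)) = CARD('n) - card S"
  unfolding Compl_eq_Diff_UNIV by (simp add: card_Diff_subset)

lemma sigma_inv:
  fixes lam :: "'n::finite \<Rightarrow> real"
  assumes nz: "\<forall>i. lam i \<noteq> 0" and j: "j \<le> CARD('n)"
  shows "sigma j lam = (\<Prod>i\<in>UNIV. lam i) * sigma (CARD('n) - j) (\<lambda>i. 1 / lam i)"
proof -
  have bij: "bij_betw (\<lambda>S. - S) {S::'n set. card S = j} {T. card T = CARD('n) - j}"
  proof (rule bij_betwI[where g = "\<lambda>S. - S"])
    show "(\<lambda>S. - S) \<in> {S::'n set. card S = j} \<rightarrow> {T. card T = CARD('n) - j}"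
      by (auto simp: card_compl)
    show "(\<lambda>S. - S) \<in> {T::'n set. card T = CARD('n) - j} \<rightarrow> {S. card S = j}"
      using j by (auto simp: card_compl card_mono)
  qed auto
  have "sigma (CARD('n) - j) (\<lambda>i. 1 / lam i) = (\<Sum>S\<in>{S::'n set. card S = j}. \<Prod>i\<in>-S. 1 / lam i)"
    unfolding sigma_def using sum.reindex_bij_betw[OF bij, of "\<lambda>T. \<Prod>i\<in>T. 1 / lam i"] by simp
  then have "(\<Prod>i\<in>UNIV. lam i) * sigma (CARD('n) - j) (\<lambda>i. 1 / lam i)
      = (\<Sum>S\<in>{S::'n set. card S = j}. (\<Prod>i\<in>UNIV. lam i) * (\<Prod>i\<in>-S. 1 / lam i))"
    by (simp add: sum_distrib_left)
  also have "\<dots> = (\<Sum>S\<in>{S::'n set. card S = j}. \<Prod>i\<in>S. lam i)"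
  proof (rule sum.cong[OF refl])
    fix S :: "'n set"
    have "(\<Prod>i\<in>UNIV. lam i) = (\<Prod>i\<in>S. lam i) * (\<Prod>i\<in>-S. lam i)"
      using prod.union_disjoint[of S "-S" lam] by (simp add: Compl_partition)  
    moreover have "(\<Prod>i\<in>-S. lam i) * (\<Prod>i\<in>-S. 1 / lam i) = 1"
      using nz by (simp add: prod.distrib[symmetric])
    ultimately show "(\<Prod>i\<in>UNIV. lam i) * (\<Prod>i\<in>-S. 1 / lam i) = (\<Prod>i\<in>S. lam i)"
      by (metis mult.assoc mult_1_right)
  qed
  finally show ?thesis unfolding sigma_def by simp
qed

lemma claimA:
  fixes lam :: "'n::finite \<Rightarrow> real"
  assumes kn: "k \<le> CARD('n)" and lk: "l \<le> k" and ge: "\<forall>i. lam i \<ge> u" and u: "u > 0"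
  shows "real (CARD('n) choose k) * u^(k - l) * sigma l lam \<le> real (CARD('n) choose l) * sigma k lam"
proof -
  define n where "n = CARD('n)"
  define rho where "rho i = 1 / lam i" for i
  have lpos: "\<forall>i. lam i > 0" using ge u by (meson less_le_trans)
  have rpos: "\<forall>i. rho i > 0" unfolding rho_def using lpos by simp
  have rle: "\<forall>i. rho i \<le> 1 / u" unfolding rho_def using ge u lpos by (simp add: frac_le)
  define P where "P = (\<Prod>i\<in>UNIV. lam i)"
  have Ppos: "P > 0" unfolding P_def using lpos by (simp add: prod_pos)
  have B: "real (n choose (n - k)) * sigma (n - l) rho
           \<le> real (n choose (n - l)) * (1/u)^((n - l) - (n - k)) * sigma (n - k) rho"
  proof -
    have pos: "\<forall>j\<in>{1..n - l}. sigma j rho > 0" using sigma_pos[of rho] rpos unfolding n_def by auto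
    show ?thesis using claimB[of "n - l" "n - k" rho "1/u", OF _ _ pos] rle u kn lk unfolding n_def by auto
  qed
  have nz: "\<forall>i. lam i \<noteq> 0" using lpos by (metis less_irrefl)
  have sl: "sigma l lam = P * sigma (n - l) rho" unfolding P_def rho_def n_def
    using sigma_inv[OF nz, of l] kn lk by auto
  have sk: "sigma k lam = P * sigma (n - k) rho" unfolding P_def rho_def n_def
    using sigma_inv[OF nz, of k] kn by auto
  have e: "(n - l) - (n - k) = k - l" using kn lk unfolding n_def by simp
  have bl: "n choose (n - l) = n choose l" "n choose (n - k) = n choose k"
    using kn lk unfolding n_def by (auto simp: binomial_symmetric[symmetric])
  have B': "real (n choose k) * sigma (n - l) rho \<le> real (n choose l) * (1/u)^(k-l) * sigma (n - k) rho"
    using B unfolding e bl .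
  have "real (n choose k) * sigma (n - l) rho * (P * u^(k-l)) \<le> real (n choose l) * (1/u)^(k-l) * sigma (n - k) rho * (P * u^(k-l))"
    using B' Ppos u by (intro mult_right_mono) auto
  moreover have "(1/u)^(k-l) * u^(k-l) = 1" using u by (simp add: power_one_over field_simps)
  ultimately have "real (n choose k) * u^(k-l) * (P * sigma (n - l) rho) \<le> real (n choose l) * (P * sigma (n - k) rho) * ((1/u)^(k-l) * u^(k-l))"
    by (simp add: algebra_simps)
  then have "real (n choose k) * u^(k-l) * sigma l lam \<le> real (n choose l) * sigma k lam"
    unfolding sl[symmetric] sk[symmetric] using \<open>(1/u)^(k-l) * u^(k-l) = 1\<close> by simp
  then show ?thesis unfolding n_def .
qed

lemma line_deriv:
  fixes F :: "'a::real_normed_vector \<Rightarrow> real"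
  assumes "(F has_derivative F') (at (p + s *\<^sub>R v))"
  shows "((\<lambda>s. F (p + s *\<^sub>R v)) has_real_derivative F' v) (at s)"
proof -
  have l: "((\<lambda>s. p + s *\<^sub>R v) has_derivative (\<lambda>r. r *\<^sub>R v)) (at s)"
    by (auto intro!: derivative_eq_intros)
  have c: "((\<lambda>s. F (p + s *\<^sub>R v)) has_derivative (\<lambda>r. F' (r *\<^sub>R v))) (at s)"
    using has_derivative_compose[OF l assms] by (simp add: o_def)
  have lin: "linear F'" using has_derivative_linear[OF assms] .
  have eq: "(\<lambda>r. F' (r *\<^sub>R v)) = (*) (F' v)"
    by (rule ext) (simp add: linear_scale[OF lin] mult.commute)
  show ?thesis using c unfolding has_field_derivative_def eq .
qed

lemma mixed_mvt:
  fixes h :: "'a::euclidean_space \<Rightarrow> real"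
  assumes D1: "\<forall>y\<in>ball x r. (h has_derivative (\<lambda>u. Dh y \<bullet> u)) (at y)"
    and D2: "\<forall>y\<in>ball x r. (Dh has_derivative D2h y) (at y)"
    and t: "0 < t" "t * (norm v + norm w) < r"
  shows "\<exists>\<sigma> \<tau>. 0 < \<sigma> \<and> \<sigma> < t \<and> 0 < \<tau> \<and> \<tau> < t \<and>
     h (x + t *\<^sub>R v + t *\<^sub>R w) - h (x + t *\<^sub>R v) - h (x + t *\<^sub>R w) + h x
       = t * t * (D2h (x + \<sigma> *\<^sub>R v + \<tau> *\<^sub>R w) w \<bullet> v)"
proof -
  have inb: "x + a *\<^sub>R v + b *\<^sub>R w \<in> ball x r" if "0 \<le> a" "a \<le> t" "0 \<le> b" "b \<le> t" for a b
  proof -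
    have "norm (a *\<^sub>R v + b *\<^sub>R w) \<le> norm (a *\<^sub>R v) + norm (b *\<^sub>R w)" by (rule norm_triangle_ineq)
    also have "\<dots> = a * norm v + b * norm w" using that by simp
    finally have "norm (a *\<^sub>R v + b *\<^sub>R w) \<le> a * norm v + b * norm w" .
    also have "\<dots> \<le> t * norm v + t * norm w" using that by (intro add_mono mult_right_mono) auto
    finally have "norm (a *\<^sub>R v + b *\<^sub>R w) < r" using t by (simp add: algebra_simps)
    moreover have "x - (x + a *\<^sub>R v + b *\<^sub>R w) = - (a *\<^sub>R v + b *\<^sub>R w)" by (simp add: algebra_simps)
    ultimately show ?thesis by (simp only: mem_ball dist_norm norm_minus_cancel)
  qed
  define phi where "phi s = h (x + t *\<^sub>R w + s *\<^sub>R v) - h (x + s *\<^sub>R v)" for s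
  have dphi: "DERIV phi s :> (Dh (x + t *\<^sub>R w + s *\<^sub>R v) \<bullet> v - Dh (x + s *\<^sub>R v) \<bullet> v)" if "0 \<le> s" "s \<le> t" for s
  proof -
    have a: "x + t *\<^sub>R w + s *\<^sub>R v \<in> ball x r" using inb[of s t] that t by (simp add: algebra_simps)
    have b: "x + s *\<^sub>R v \<in> ball x r" using inb[of s 0] that t by simp
    show ?thesis unfolding phi_def
      by (intro DERIV_diff line_deriv[where F=h and F'="\<lambda>u. Dh _ \<bullet> u"]) (use D1 a b in auto)
  qed
  obtain \<sigma> where s: "0 < \<sigma>" "\<sigma> < t" "phi t - phi 0 = (t - 0) * (Dh (x + t *\<^sub>R w + \<sigma> *\<^sub>R v) \<bullet> v - Dh (x + \<sigma> *\<^sub>R v) \<bullet> v)"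
  proof -
    have "\<exists>z. 0 < z \<and> z < t \<and> phi t - phi 0 = (t - 0) * (Dh (x + t *\<^sub>R w + z *\<^sub>R v) \<bullet> v - Dh (x + z *\<^sub>R v) \<bullet> v)"
      by (rule MVT2[OF t(1)]) (rule dphi)
    then show ?thesis using that by blast
  qed
  define psi where "psi r' = Dh (x + \<sigma> *\<^sub>R v + r' *\<^sub>R w) \<bullet> v" for r'
  have dpsi: "DERIV psi r' :> (D2h (x + \<sigma> *\<^sub>R v + r' *\<^sub>R w) w \<bullet> v)" if "0 \<le> r'" "r' \<le> t" for r'
  proof -
    have a: "x + \<sigma> *\<^sub>R v + r' *\<^sub>R w \<in> ball x r" using inb[of \<sigma> r'] that s by simp
    have "((\<lambda>y. Dh y \<bullet> v) has_derivative (\<lambda>u. D2h (x + \<sigma> *\<^sub>R v + r' *\<^sub>R w) u \<bullet> v)) (at (x + \<sigma> *\<^sub>R v + r' *\<^sub>R w))"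
      using D2 a by (auto intro: has_derivative_inner_left)
    then show ?thesis unfolding psi_def by (rule line_deriv)
  qed
  obtain \<tau> where tau: "0 < \<tau>" "\<tau> < t" "psi t - psi 0 = (t - 0) * (D2h (x + \<sigma> *\<^sub>R v + \<tau> *\<^sub>R w) w \<bullet> v)"
  proof -
    have "\<exists>z. 0 < z \<and> z < t \<and> psi t - psi 0 = (t - 0) * (D2h (x + \<sigma> *\<^sub>R v + z *\<^sub>R w) w \<bullet> v)"
      by (rule MVT2[OF t(1)]) (rule dpsi)
    then show ?thesis using that by blast
  qed
  have "h (x + t *\<^sub>R v + t *\<^sub>R w) - h (x + t *\<^sub>R v) - h (x + t *\<^sub>R w) + h x = phi t - phi 0"
    unfolding phi_def by (simp add: algebra_simps)
  also have "\<dots> = t * (psi t - psi 0)" using s(3) unfolding psi_def by (simp add: algebra_simps)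
  also have "\<dots> = t * t * (D2h (x + \<sigma> *\<^sub>R v + \<tau> *\<^sub>R w) w \<bullet> v)" using tau(3) by simp
  finally show ?thesis using s tau by blast
qed

lemma abs_aux: "\<bar>p - a\<bar> < \<bar>a - b\<bar> / 2 \<Longrightarrow> \<bar>q - b\<bar> < \<bar>a - b\<bar> / 2 \<Longrightarrow> p = (q::real) \<Longrightarrow> False"
  by (auto simp: abs_if split: if_split_asm)

lemma hess_sym:
  fixes h :: "'a::euclidean_space \<Rightarrow> real"
  assumes U: "open U"
    and D1: "\<forall>x\<in>U. (h has_derivative (\<lambda>v. Dh x \<bullet> v)) (at x)"
    and D2: "\<forall>x\<in>U. (Dh has_derivative D2h x) (at x)"
    and D2c: "\<forall>v. continuous_on U (\<lambda>x. D2h x v)"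
    and x: "x \<in> U"
  shows "D2h x v \<bullet> w = D2h x w \<bullet> v"
proof (rule ccontr)
  assume ne: "D2h x v \<bullet> w \<noteq> D2h x w \<bullet> v"
  obtain r where r: "r > 0" "ball x r \<subseteq> U" using U x open_contains_ball by blast
  have D1': "\<forall>y\<in>ball x r. (h has_derivative (\<lambda>u. Dh y \<bullet> u)) (at y)" using D1 r by auto
  have D2': "\<forall>y\<in>ball x r. (Dh has_derivative D2h y) (at y)" using D2 r by auto
  define F1 where "F1 y = D2h y w \<bullet> v" for y
  define F2 where "F2 y = D2h y v \<bullet> w" for y
  have c1: "isCont F1 x" unfolding F1_def
    using D2c U x continuous_on_eq_continuous_at[of U "\<lambda>y. D2h y w \<bullet> v"]
    by (auto intro: continuous_on_inner continuous_on_const)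
  have c2: "isCont F2 x" unfolding F2_def
    using D2c U x continuous_on_eq_continuous_at[of U "\<lambda>y. D2h y v \<bullet> w"]
    by (auto intro: continuous_on_inner continuous_on_const)
  define e where "e = \<bar>F1 x - F2 x\<bar> / 2"
  have e: "e > 0" using ne unfolding e_def F1_def F2_def by (simp add: inner_commute)
  obtain d1 where d1: "d1 > 0" "\<forall>y. dist y x < d1 \<longrightarrow> dist (F1 y) (F1 x) < e"
    using c1 e unfolding continuous_at_eps_delta by blast
  obtain d2 where d2: "d2 > 0" "\<forall>y. dist y x < d2 \<longrightarrow> dist (F2 y) (F2 x) < e"
    using c2 e unfolding continuous_at_eps_delta by blast
  define m where "m = min r (min d1 d2)"
  have m: "m > 0" unfolding m_def using r d1 d2 by simp
  define t where "t = m / (2 * (norm v + norm w + 1))"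
  have t: "t > 0" "t * (norm v + norm w) < r" "t * (norm v + norm w) < d1" "t * (norm v + norm w) < d2"
  proof -
    have pos: "norm v + norm w + 1 > 0" by (simp add: add_nonneg_pos)
    show "t > 0" unfolding t_def using m pos by simp
    have "t * (norm v + norm w) < t * (2 * (norm v + norm w + 1))" using \<open>t > 0\<close> pos
      by (intro mult_strict_left_mono) auto
    also have "\<dots> = m" unfolding t_def using pos by simp
    finally have "t * (norm v + norm w) < m" .
    then show "t * (norm v + norm w) < r" "t * (norm v + norm w) < d1" "t * (norm v + norm w) < d2"
      unfolding m_def by auto
  qed
  obtain \<sigma> \<tau> where st: "0 < \<sigma>" "\<sigma> < t" "0 < \<tau>" "\<tau> < t"
    "h (x + t *\<^sub>R v + t *\<^sub>R w) - h (x + t *\<^sub>R v) - h (x + t *\<^sub>R w) + h x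
       = t * t * F1 (x + \<sigma> *\<^sub>R v + \<tau> *\<^sub>R w)"
    using mixed_mvt[OF D1' D2' t(1,2)] unfolding F1_def by blast
  obtain \<sigma>' \<tau>' where st': "0 < \<sigma>'" "\<sigma>' < t" "0 < \<tau>'" "\<tau>' < t"
    "h (x + t *\<^sub>R w + t *\<^sub>R v) - h (x + t *\<^sub>R w) - h (x + t *\<^sub>R v) + h x
       = t * t * F2 (x + \<sigma>' *\<^sub>R w + \<tau>' *\<^sub>R v)"
    using mixed_mvt[OF D1' D2' t(1), of w v] t(2) unfolding F2_def by (auto simp: add.commute)
  have eq: "F1 (x + \<sigma> *\<^sub>R v + \<tau> *\<^sub>R w) = F2 (x + \<sigma>' *\<^sub>R w + \<tau>' *\<^sub>R v)"
  proof -
    have "t * t * F1 (x + \<sigma> *\<^sub>R v + \<tau> *\<^sub>R w) = t * t * F2 (x + \<sigma>' *\<^sub>R w + \<tau>' *\<^sub>R v)"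
      using st(5) st'(5) by (simp add: algebra_simps)
    then show ?thesis using t(1) by simp
  qed
  have nb: "dist (x + a *\<^sub>R p + b *\<^sub>R q) x \<le> t * (norm v + norm w)"
    if "p = v \<and> q = w \<or> p = w \<and> q = v" "0 < a" "a < t" "0 < b" "b < t" for a b p q
  proof -
    have "norm (a *\<^sub>R p + b *\<^sub>R q) \<le> norm (a *\<^sub>R p) + norm (b *\<^sub>R q)" by (rule norm_triangle_ineq)
    also have "\<dots> = a * norm p + b * norm q" using that by simp
    finally have "norm (a *\<^sub>R p + b *\<^sub>R q) \<le> a * norm p + b * norm q" .
    also have "\<dots> \<le> t * norm p + t * norm q" using that by (intro add_mono mult_right_mono) auto
    finally show ?thesis using that by (auto simp: algebra_simps dist_norm)
  qed
  have "dist (x + \<sigma> *\<^sub>R v + \<tau> *\<^sub>R w) x < d1" using nb[of v w \<sigma> \<tau>] st t by auto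
  then have a1: "\<bar>F1 (x + \<sigma> *\<^sub>R v + \<tau> *\<^sub>R w) - F1 x\<bar> < e" using d1 by (auto simp: dist_real_def)
  have "dist (x + \<sigma>' *\<^sub>R w + \<tau>' *\<^sub>R v) x < d2" using nb[of w v \<sigma>' \<tau>'] st' t by auto
  then have a2: "\<bar>F2 (x + \<sigma>' *\<^sub>R w + \<tau>' *\<^sub>R v) - F2 x\<bar> < e" using d2 by (auto simp: dist_real_def)
  show False using abs_aux[OF a1[unfolded e_def] a2[unfolded e_def] eq] .
qed

lemma quad_zero:
  fixes a c :: real
  assumes "\<forall>t. 2 * t * a + t^2 * c \<le> 0"
  shows "a = 0"
proof -
  define d where "d = \<bar>c\<bar> + 1"
  have d: "d > 0" unfolding d_def by simp
  have "2 * (a / d) * a + (a / d)^2 * c \<le> 0" using assms by blast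
  then have "(2 * (a / d) * a + (a / d)^2 * c) * d^2 \<le> 0" using d by (simp add: mult_nonpos_nonneg)
  moreover have "(2 * (a / d) * a + (a / d)^2 * c) * d^2 = a^2 * (2 * d + c)" using d
    by (simp add: field_simps power2_eq_square)
  ultimately have "a^2 * (2 * d + c) \<le> 0" by simp
  moreover have "2 * d + c > 0" unfolding d_def by (simp add: abs_if)
  ultimately have "a^2 \<le> 0" by (simp add: mult_le_0_iff)
  then show ?thesis by simp
qed

lemma spectral:
  fixes A :: "'a::euclidean_space \<Rightarrow> 'a"
  assumes lin: "linear A" and sym: "\<forall>x y. A x \<bullet> y = A y \<bullet> x"
  shows "subspace S \<Longrightarrow> \<exists>B. B \<subseteq> S \<and> finite B \<and> card B = dim S \<and> (\<forall>b\<in>B. norm b = 1) \<and>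
     (\<forall>b\<in>B. \<forall>c\<in>B. b \<noteq> c \<longrightarrow> b \<bullet> c = 0) \<and> (\<forall>b\<in>B. \<forall>y\<in>S. A b \<bullet> y = (A b \<bullet> b) * (b \<bullet> y))"
proof (induction "dim S" arbitrary: S)
  case 0
  then show ?case by (intro exI[of _ "{}"]) auto
next
  case (Suc m S)
  note subS = Suc.prems
  have "\<not> S \<subseteq> {0}" using Suc.hyps(2) dim_eq_0 by (metis nat.distinct(1))
  then obtain x where x: "x \<in> S" "x \<noteq> 0" by auto
  define K where "K = S \<inter> sphere 0 1"
  have cK: "compact K" unfolding K_def using closed_subspace[OF subS] compact_sphere
    by (metis compact_Int_closed inf_commute)
  have "x /\<^sub>R norm x \<in> K" unfolding K_def using x subS by (simp add: subspace_scale)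
  then have neK: "K \<noteq> {}" by auto
  have bl: "bounded_linear A" using lin linear_conv_bounded_linear by blast
  have cq: "continuous_on K (\<lambda>y. A y \<bullet> y)"
    by (intro continuous_on_inner linear_continuous_on[OF bl] continuous_on_id)
  obtain x0 where x0: "x0 \<in> K" "\<forall>y\<in>K. A y \<bullet> y \<le> A x0 \<bullet> x0"
    using continuous_attains_sup[OF cK neK cq] by blast
  define l0 where "l0 = A x0 \<bullet> x0"
  have x0S: "x0 \<in> S" and nx0: "norm x0 = 1" using x0 unfolding K_def by auto
  have x0x0: "x0 \<bullet> x0 = 1" using nx0 by (simp add: dot_square_norm)
  have Ascale: "A (c *\<^sub>R z) = c *\<^sub>R A z" for c z using linear_scale[OF lin] .
  have Aadd: "A (y + z) = A y + A z" for y z using linear_add[OF lin] .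
  have bound: "A z \<bullet> z \<le> l0 * (z \<bullet> z)" if "z \<in> S" for z
  proof (cases "z = 0")
    case True then show ?thesis using linear_0[OF lin] by simp
  next
    case False
    have "z /\<^sub>R norm z \<in> K" unfolding K_def using that False subS by (simp add: subspace_scale)
    then have "A (z /\<^sub>R norm z) \<bullet> (z /\<^sub>R norm z) \<le> l0" using x0 unfolding l0_def by blast
    then have "(A z \<bullet> z) / (norm z)^2 \<le> l0" by (simp add: Ascale power2_eq_square divide_inverse mult.commute mult.left_commute)
    then have "A z \<bullet> z \<le> l0 * (norm z)^2" using False by (simp add: field_simps)
    then show ?thesis by (simp add: power2_norm_eq_inner)
  qed
  have orth: "A x0 \<bullet> y = 0" if "y \<in> S" "x0 \<bullet> y = 0" for y
  proof -
    define c where "c = A y \<bullet> y - l0 * (y \<bullet> y)"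
    have "2 * t * (A x0 \<bullet> y) + t^2 * c \<le> 0" for t
    proof -
      have zS: "x0 + t *\<^sub>R y \<in> S" using that x0S subS by (simp add: subspace_add subspace_scale)
      have "A (x0 + t *\<^sub>R y) \<bullet> (x0 + t *\<^sub>R y) = l0 + 2 * t * (A x0 \<bullet> y) + t^2 * (A y \<bullet> y)"
        unfolding Aadd Ascale l0_def using sym
        by (simp add: inner_add_left inner_add_right power2_eq_square algebra_simps)
      moreover have "(x0 + t *\<^sub>R y) \<bullet> (x0 + t *\<^sub>R y) = 1 + t^2 * (y \<bullet> y)"
        using x0x0 that(2) by (simp add: inner_add_left inner_add_right inner_commute power2_eq_square)
      ultimately show ?thesis using bound[OF zS] unfolding c_def by (simp add: algebra_simps)
    qed
    then show ?thesis using quad_zero by blast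
  qed
  define S' where "S' = {y \<in> S. x0 \<bullet> y = 0}"
  have subS': "subspace S'" unfolding S'_def
    using subspace_inter[OF subS subspace_hyperplane[of x0]] by (simp add: Int_def)
  have dimS': "dim S' = m"
  proof -
    have sp: "subspace (span {x0})" by simp
    have "span {x0} \<subseteq> S" using x0S subS by (simp add: span_minimal)
    then have "dim {y \<in> S. \<forall>x\<in>span {x0}. orthogonal x y} + dim (span {x0}) = dim S"
      using dim_subspace_orthogonal_to_vectors[OF sp subS] by blast
    moreover have "{y \<in> S. \<forall>x\<in>span {x0}. orthogonal x y} = S'"
    proof
      show "{y \<in> S. \<forall>x\<in>span {x0}. orthogonal x y} \<subseteq> S'"
        unfolding S'_def orthogonal_def by (auto intro: span_base)
      show "S' \<subseteq> {y \<in> S. \<forall>x\<in>span {x0}. orthogonal x y}"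
      proof (safe)
        fix y z assume y: "y \<in> S'" and z: "z \<in> span {x0}"
        obtain c where "z = c *\<^sub>R x0" using z span_singleton by auto
        then show "orthogonal z y" using y unfolding S'_def orthogonal_def by simp
      next
        fix y assume "y \<in> S'" then show "y \<in> S" unfolding S'_def by simp
      qed
    qed
    moreover have "dim (span {x0}) = 1" using nx0 by (auto simp: dim_insert)
    ultimately show ?thesis using Suc.hyps(2) by simp
  qed
  obtain B' where B': "B' \<subseteq> S'" "finite B'" "card B' = dim S'" "\<forall>b\<in>B'. norm b = 1"
     "\<forall>b\<in>B'. \<forall>c\<in>B'. b \<noteq> c \<longrightarrow> b \<bullet> c = 0" "\<forall>b\<in>B'. \<forall>y\<in>S'. A b \<bullet> y = (A b \<bullet> b) * (b \<bullet> y)"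
    using Suc.hyps(1)[OF dimS'[symmetric] subS'] by blast
  have x0B': "x0 \<notin> B'" using B'(1) x0x0 unfolding S'_def by auto
  have decomp: "y - (x0 \<bullet> y) *\<^sub>R x0 \<in> S'" if "y \<in> S" for y
    unfolding S'_def using that x0S subS x0x0
    by (simp add: subspace_diff subspace_scale inner_diff_right)
  show ?case
  proof (intro exI[of _ "insert x0 B'"] conjI)
    show "insert x0 B' \<subseteq> S" using x0S B'(1) unfolding S'_def by auto
    show "finite (insert x0 B')" using B'(2) by simp
    show "card (insert x0 B') = dim S" using B'(2,3) x0B' dimS' Suc.hyps(2) by simp
    show "\<forall>b\<in>insert x0 B'. norm b = 1" using B'(4) nx0 by simp
    show "\<forall>b\<in>insert x0 B'. \<forall>c\<in>insert x0 B'. b \<noteq> c \<longrightarrow> b \<bullet> c = 0"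
      using B'(1,5) unfolding S'_def by (auto simp: inner_commute)
    show "\<forall>b\<in>insert x0 B'. \<forall>y\<in>S. A b \<bullet> y = (A b \<bullet> b) * (b \<bullet> y)"
    proof (intro ballI)
      fix b y assume b: "b \<in> insert x0 B'" and y: "y \<in> S"
      define y' where "y' = y - (x0 \<bullet> y) *\<^sub>R x0"
      have y'S: "y' \<in> S'" unfolding y'_def using decomp[OF y] .
      have yy: "y = (x0 \<bullet> y) *\<^sub>R x0 + y'" unfolding y'_def by simp
      show "A b \<bullet> y = (A b \<bullet> b) * (b \<bullet> y)"
      proof (cases "b = x0")
        case True
        have "A x0 \<bullet> y' = 0" using orth y'S unfolding S'_def by auto
        then have "A x0 \<bullet> y = (x0 \<bullet> y) * (A x0 \<bullet> x0)"
          by (subst yy) (simp add: inner_add_right)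
        then show ?thesis using True by simp
      next
        case False
        then have bB: "b \<in> B'" using b by simp
        have bS': "b \<in> S'" using bB B'(1) by auto
        have "A b \<bullet> x0 = 0" using sym orth[of b] bS' unfolding S'_def by auto
        moreover have "b \<bullet> x0 = 0" using bS' unfolding S'_def by (simp add: inner_commute)
        moreover have "A b \<bullet> y' = (A b \<bullet> b) * (b \<bullet> y')" using B'(6) bB y'S by blast
        moreover have "A b \<bullet> y = (x0 \<bullet> y) * (A b \<bullet> x0) + A b \<bullet> y'"
          by (subst yy) (simp add: inner_add_right)
        moreover have "b \<bullet> y = (x0 \<bullet> y) * (b \<bullet> x0) + b \<bullet> y'"
          by (subst yy) (simp add: inner_add_right)
        ultimately show ?thesis by simp
      qed
    qed
  qed
qed

lemma DIM_pt: "DIM(('n::finite) pt) = CARD('n) + 1"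
  by simp

lemma eig_exists:
  fixes h :: "(real^'n::finite) \<times> real \<Rightarrow> real"
    and Dh :: "(real^'n) \<times> real \<Rightarrow> (real^'n) \<times> real"
    and D2h :: "(real^'n) \<times> real \<Rightarrow> (real^'n) \<times> real \<Rightarrow> (real^'n) \<times> real"
  assumes U: "open U"
    and D1: "\<forall>x\<in>U. (h has_derivative (\<lambda>v. Dh x \<bullet> v)) (at x)"
    and D2: "\<forall>x\<in>U. (Dh has_derivative D2h x) (at x)"
    and D2c: "\<forall>v. continuous_on U (\<lambda>x. D2h x v)"
    and xi: "\<xi> \<in> U" and nz: "cap_normal \<theta> \<xi> \<noteq> 0"
  shows "\<exists>lam b. is_eigendecomp \<theta> h Dh D2h \<xi> lam b"
proof -
  define nu where "nu = cap_normal \<theta> \<xi>"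
  define c where "c = h \<xi> - Dh \<xi> \<bullet> nu"
  define A where "A x = D2h \<xi> x + c *\<^sub>R x" for x
  have linD: "linear (D2h \<xi>)" using D2 xi has_derivative_linear by blast
  have lin: "linear A" unfolding A_def
    by (intro linearI) (auto simp: linear_add[OF linD] linear_scale[OF linD] algebra_simps)
  have sym: "\<forall>x y. A x \<bullet> y = A y \<bullet> x"
  proof (intro allI)
    fix x y
    have "D2h \<xi> x \<bullet> y = D2h \<xi> y \<bullet> x" using hess_sym[OF U D1 D2 D2c xi] .
    then show "A x \<bullet> y = A y \<bullet> x" unfolding A_def by (simp only: inner_add_left inner_scaleR_left inner_commute[of x y])
  qed
  define T where "T = {y. nu \<bullet> y = 0}"
  have sT: "subspace T" unfolding T_def by (rule subspace_hyperplane)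
  have dT: "dim T = CARD('n)" unfolding T_def using dim_hyperplane[of nu] nz unfolding nu_def by simp
  obtain B where B: "B \<subseteq> T" "finite B" "card B = dim T" "\<forall>b\<in>B. norm b = 1"
     "\<forall>b\<in>B. \<forall>c\<in>B. b \<noteq> c \<longrightarrow> b \<bullet> c = 0" "\<forall>b\<in>B. \<forall>y\<in>T. A b \<bullet> y = (A b \<bullet> b) * (b \<bullet> y)"
    using spectral[OF lin sym sT] by blast
  obtain f where f: "bij_betw f (UNIV :: 'n set) B"
    using finite_same_card_bij[of "UNIV :: 'n set" B] B(2,3) dT by auto
  have fB: "f i \<in> B" for i using f bij_betwE by blast
  have finj: "f i = f j \<Longrightarrow> i = j" for i j using f unfolding bij_betw_def inj_on_def by blast
  define lam where "lam i = A (f i) \<bullet> f i" for i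
  have "is_eigendecomp \<theta> h Dh D2h \<xi> lam f"
    unfolding is_eigendecomp_def
  proof (intro conjI allI impI)
    fix i j
    show "f i \<bullet> f j = (if i = j then 1 else 0)"
    proof (cases "i = j")
      case True then show ?thesis using B(4) fB[of i] by (simp add: dot_square_norm)
    next
      case False then show ?thesis using B(5) fB finj by metis
    qed
  next
    fix i show "f i \<bullet> cap_normal \<theta> \<xi> = 0" using B(1) fB[of i] unfolding T_def nu_def by (auto simp: inner_commute)
  next
    fix i Y assume Y: "Y \<bullet> cap_normal \<theta> \<xi> = 0"
    then have YT: "Y \<in> T" unfolding T_def nu_def by (simp add: inner_commute)
    have "Wform \<theta> h Dh D2h \<xi> (f i) Y = A (f i) \<bullet> Y"
      unfolding Wform_def A_def c_def nu_def by (simp add: inner_add_left algebra_simps)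
    also have "\<dots> = lam i * (f i \<bullet> Y)" unfolding lam_def using B(6) fB YT by blast
    finally show "Wform \<theta> h Dh D2h \<xi> (f i) Y = lam i * (f i \<bullet> Y)" .
  qed
  then show ?thesis by blast
qed

lemma curve_deriv:
  fixes F :: "'a::real_normed_vector \<Rightarrow> real"
  assumes "(F has_derivative F') (at (g t))" "(g has_vector_derivative g') (at t)"
  shows "((\<lambda>t. F (g t)) has_real_derivative F' g') (at t)"
proof -
  have c: "((\<lambda>t. F (g t)) has_derivative (\<lambda>s. F' (s *\<^sub>R g'))) (at t)"
    using has_derivative_compose[OF assms(2)[unfolded has_vector_derivative_def] assms(1)] by (simp add: o_def)
  have lin: "linear F'" using has_derivative_linear[OF assms(1)] .
  have eq: "(\<lambda>s. F' (s *\<^sub>R g')) = (*) (F' g')"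
    by (rule ext) (simp add: linear_scale[OF lin] mult.commute)
  show ?thesis using c unfolding has_field_derivative_def eq .
qed

lemma curve_vderiv:
  fixes F :: "'a::real_normed_vector \<Rightarrow> 'b::real_normed_vector"
  assumes "(F has_derivative F') (at (g t))" "(g has_vector_derivative g') (at t)"
  shows "((\<lambda>t. F (g t)) has_vector_derivative F' g') (at t)"
proof -
  have c: "((\<lambda>t. F (g t)) has_derivative (\<lambda>s. F' (s *\<^sub>R g'))) (at t)"
    using has_derivative_compose[OF assms(2)[unfolded has_vector_derivative_def] assms(1)] by (simp add: o_def)
  have lin: "linear F'" using has_derivative_linear[OF assms(1)] .
  have eq: "(\<lambda>s. F' (s *\<^sub>R g')) = (\<lambda>s. s *\<^sub>R F' g')"
    by (rule ext) (simp add: linear_scale[OF lin])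
  show ?thesis using c unfolding has_vector_derivative_def eq .
qed

lemma inner_vd:
  fixes a b :: "real \<Rightarrow> 'a::real_inner"
  assumes "(a has_vector_derivative a') (at t)" "(b has_vector_derivative b') (at t)"
  shows "((\<lambda>t. a t \<bullet> b t) has_real_derivative (a t \<bullet> b' + a' \<bullet> b t)) (at t)"
proof -
  have "((\<lambda>t. a t \<bullet> b t) has_derivative (\<lambda>s. a t \<bullet> (s *\<^sub>R b') + (s *\<^sub>R a') \<bullet> b t)) (at t)"
    using has_derivative_inner[OF assms(1)[unfolded has_vector_derivative_def] assms(2)[unfolded has_vector_derivative_def]] .
  moreover have "(\<lambda>s. a t \<bullet> (s *\<^sub>R b') + (s *\<^sub>R a') \<bullet> b t) = (*) (a t \<bullet> b' + a' \<bullet> b t)"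
    by (rule ext) (simp add: algebra_simps)
  ultimately show ?thesis unfolding has_field_derivative_def by simp
qed

lemma circ_vd:
  fixes c p v :: "'a::real_normed_vector"
  shows "((\<lambda>t. c + cos t *\<^sub>R p + sin t *\<^sub>R v) has_vector_derivative (- sin t *\<^sub>R p + cos t *\<^sub>R v)) (at t)"
  unfolding has_vector_derivative_def
  by (auto intro!: derivative_eq_intros simp: algebra_simps)

lemma circ'_vd:
  fixes p v :: "'a::real_normed_vector"
  shows "((\<lambda>t. - sin t *\<^sub>R p + cos t *\<^sub>R v) has_vector_derivative (- cos t *\<^sub>R p - sin t *\<^sub>R v)) (at t)"
  unfolding has_vector_derivative_def
  by (auto intro!: derivative_eq_intros simp: algebra_simps)

lemma first_order:
  fixes f :: "real \<Rightarrow> real"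
  assumes "DERIV f 0 :> d" "\<delta> > 0" "\<forall>t. 0 < t \<and> t < \<delta> \<longrightarrow> f t \<le> f 0"
  shows "d \<le> 0"
proof (rule ccontr)
  assume "\<not> d \<le> 0"
  then obtain e where e: "e > 0" "\<forall>h>0. h < e \<longrightarrow> f 0 < f (0 + h)"
    using DERIV_pos_inc_right[OF assms(1)] by auto
  define t where "t = min \<delta> e / 2"
  have "0 < t" "t < \<delta>" "t < e" unfolding t_def using e assms(2) by auto
  then show False using e assms(3) by force
qed

lemma second_order:
  fixes f f' :: "real \<Rightarrow> real"
  assumes "\<delta> > 0" "\<forall>t. \<bar>t\<bar> < \<delta> \<longrightarrow> DERIV f t :> f' t" "DERIV f' 0 :> d" "f' 0 = 0"
    "\<forall>t. 0 < t \<and> t < \<delta> \<longrightarrow> f t \<le> f 0"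
  shows "d \<le> 0"
proof (rule ccontr)
  assume "\<not> d \<le> 0"
  then obtain e where e: "e > 0" "\<forall>h>0. h < e \<longrightarrow> f' 0 < f' (0 + h)"
    using DERIV_pos_inc_right[OF assms(3)] by auto
  define t where "t = min \<delta> e / 2"
  have t: "0 < t" "t < \<delta>" "t < e" unfolding t_def using e assms(1) by auto
  have "\<exists>z. 0 < z \<and> z < t \<and> f t - f 0 = (t - 0) * f' z"
    by (rule MVT2[OF t(1)]) (use assms(2) t in auto)
  then obtain z where z: "0 < z" "z < t" "f t - f 0 = t * f' z" by auto
  have "f' z > 0" using e z t assms(4) by force
  then have "f t > f 0" using z t by (simp add: algebra_simps)
  then show False using assms(5) t by force
qed

lemma small_eps:
  fixes q B C :: real
  assumes "\<forall>\<epsilon>. 0 < \<epsilon> \<and> \<epsilon> \<le> 1 \<longrightarrow> q \<le> \<epsilon> * B + \<epsilon>^2 * C"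
  shows "q \<le> 0"
proof (rule ccontr)
  assume "\<not> q \<le> 0"
  then have q: "q > 0" by simp
  define K where "K = \<bar>B\<bar> + \<bar>C\<bar> + 1"
  have K: "K > 0" unfolding K_def by simp
  define e where "e = min 1 (q / (2 * K))"
  have e: "0 < e" "e \<le> 1" "e \<le> q / (2 * K)" unfolding e_def using q K by auto
  have "q \<le> e * B + e^2 * C" using assms e by blast
  also have "\<dots> \<le> e * \<bar>B\<bar> + e * \<bar>C\<bar>"
  proof -
    have "e * B \<le> e * \<bar>B\<bar>" using e by (simp add: mult_left_mono)
    moreover have "e^2 * C \<le> e^2 * \<bar>C\<bar>" by (simp add: mult_left_mono)
    moreover have "e^2 * \<bar>C\<bar> \<le> e * \<bar>C\<bar>" using e by (simp add: power2_eq_square mult_right_mono mult_left_le_one_le)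
    ultimately show ?thesis by linarith
  qed
  also have "\<dots> < e * K" unfolding K_def using e by (simp add: algebra_simps)
  also have "\<dots> \<le> q / 2" using e K by (simp add: field_simps)
  finally show False using q by simp
qed

lemma inner_eN: "y \<bullet> (eN :: ('n::finite) pt) = - snd y"
  unfolding eN_def by (simp add: inner_Pair_0)

lemma eN_eN: "(eN :: ('n::finite) pt) \<bullet> eN = 1"
  by (simp add: inner_eN eN_def)

lemma snd_eN: "snd (eN :: ('n::finite) pt) = -1"
  by (simp add: eN_def)

lemma ell_deriv: "((\<lambda>x. ell \<theta> x) has_derivative (\<lambda>w. cos \<theta> * (w \<bullet> (eN :: ('n::finite) pt)))) (at x)"
  unfolding ell_def by (auto intro!: derivative_eq_intros simp: inner_commute)

lemma max_bound:
  fixes h :: "(real^'n::finite) \<times> real \<Rightarrow> real"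
    and Dh :: "(real^'n) \<times> real \<Rightarrow> (real^'n) \<times> real"
    and D2h :: "(real^'n) \<times> real \<Rightarrow> (real^'n) \<times> real \<Rightarrow> (real^'n) \<times> real"
  assumes U: "open U" "cap \<theta> \<subseteq> U"
    and D1: "\<forall>x\<in>U. (h has_derivative (\<lambda>v. Dh x \<bullet> v)) (at x)"
    and D2: "\<forall>x\<in>U. (Dh has_derivative D2h x) (at x)"
    and th: "0 < \<theta>" "\<theta> < pi"
    and bdry: "\<forall>\<xi>\<in>cap_boundary \<theta>. Dh \<xi> \<bullet> conormal \<theta> \<xi> = cot \<theta> * h \<xi>"
    and xi0: "\<xi>0 \<in> cap \<theta>"
    and le: "\<forall>\<xi>\<in>cap \<theta>. h \<xi> \<le> a * ell \<theta> \<xi>"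
    and eq0: "h \<xi>0 = a * ell \<theta> \<xi>0"
    and v: "v \<bullet> cap_normal \<theta> \<xi>0 = 0" "norm v = 1"
  shows "Wform \<theta> h Dh D2h \<xi>0 v v \<le> a"
proof -
  define cc :: "'n pt" where "cc = cos \<theta> *\<^sub>R eN"
  define nu where "nu = cap_normal \<theta> \<xi>0"
  have nu_def': "nu = \<xi>0 - cc" unfolding nu_def cc_def cap_normal_def ..
  have nu1: "norm nu = 1" using xi0 unfolding nu_def' cc_def cap_def by simp
  have nunu: "nu \<bullet> nu = 1" using nu1 by (simp add: dot_square_norm)
  have xiU: "\<xi>0 \<in> U" using xi0 U by auto
  define g where "g x = h x - a * ell \<theta> x" for x
  define G where "G x = Dh x - (a * cos \<theta>) *\<^sub>R eN" for x
  have dg: "(g has_derivative (\<lambda>w. G x \<bullet> w)) (at x)" if "x \<in> U" for x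
  proof -
    have "(g has_derivative (\<lambda>w. Dh x \<bullet> w - a * (cos \<theta> * (w \<bullet> eN)))) (at x)"
      unfolding g_def using D1 that
      by (intro has_derivative_diff has_derivative_mult_right ell_deriv) auto
    moreover have "(\<lambda>w. Dh x \<bullet> w - a * (cos \<theta> * (w \<bullet> eN))) = (\<lambda>w. G x \<bullet> w)"
      by (rule ext) (simp add: G_def inner_diff_right inner_commute)
    ultimately show ?thesis by simp
  qed
  have dG: "(G has_derivative D2h x) (at x)" if "x \<in> U" for x
    using has_derivative_diff[OF D2[rule_format, OF that] has_derivative_const[of "(a * cos \<theta>) *\<^sub>R eN"]]
    unfolding G_def by simp
  have g0: "g \<xi>0 = 0" unfolding g_def using eq0 by simp
  have gle: "g \<xi> \<le> 0" if "\<xi> \<in> cap \<theta>" for \<xi> unfolding g_def using le that by simp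
  have xieN: "\<xi>0 \<bullet> eN = nu \<bullet> eN + cos \<theta>" unfolding nu_def' cc_def by (simp add: inner_diff_left eN_eN)
  have hxi: "h \<xi>0 = a + a * cos \<theta> * (nu \<bullet> eN)"
  proof -
    have "h \<xi>0 = a * ((sin \<theta>)\<^sup>2 + cos \<theta> * (nu \<bullet> eN + cos \<theta>))" using eq0 xieN unfolding ell_def by simp
    also have "\<dots> = a * ((sin \<theta>)\<^sup>2 + (cos \<theta>)\<^sup>2) + a * cos \<theta> * (nu \<bullet> eN)" by (simp only: power2_eq_square) algebra
    also have "(sin \<theta>)\<^sup>2 + (cos \<theta>)\<^sup>2 = 1" by (rule sin_cos_squared_add)
    finally show ?thesis by simp
  qed
  define Q where "Q w = D2h \<xi>0 w \<bullet> w - (G \<xi>0 \<bullet> nu) * (w \<bullet> w)" for w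
  have WQ: "Wform \<theta> h Dh D2h \<xi>0 w w = a * (w \<bullet> w) + Q w" for w
    unfolding Wform_def Q_def G_def nu_def[symmetric] hxi by (simp add: inner_diff_left inner_commute algebra_simps)
  have linD: "linear (D2h \<xi>0)" using D2 xiU has_derivative_linear by blast
  define \<gamma> where "\<gamma> w t = cc + cos t *\<^sub>R nu + sin t *\<^sub>R w" for w t
  have gam_eq: "\<gamma> w = (\<lambda>t. cc + cos t *\<^sub>R nu + sin t *\<^sub>R w)" for w by (rule ext) (simp add: \<gamma>_def)
  have gvd: "((\<gamma> w) has_vector_derivative (- sin t *\<^sub>R nu + cos t *\<^sub>R w)) (at t)" for w t
    unfolding gam_eq by (rule circ_vd)
  have gam0: "\<gamma> w 0 = \<xi>0" for w unfolding \<gamma>_def nu_def' by simp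
  have onsph: "norm (\<gamma> w t - cc) = 1" if "w \<bullet> nu = 0" "norm w = 1" for w t
  proof -
    have ww: "w \<bullet> w = 1" using that by (simp add: dot_square_norm)
    have "(\<gamma> w t - cc) \<bullet> (\<gamma> w t - cc) = (cos t)^2 + (sin t)^2"
      unfolding \<gamma>_def using that(1) ww nunu
      by (simp add: inner_add_left inner_add_right inner_commute power2_eq_square algebra_simps)
    then show ?thesis by (simp add: norm_eq_1)
  qed
  have incap: "\<gamma> w t \<in> cap \<theta>" if "w \<bullet> nu = 0" "norm w = 1" "snd (\<gamma> w t) \<ge> 0" for w t
    using onsph[OF that(1,2)] that(3) unfolding cap_def cc_def by simp
  have nearU: "\<exists>d>0. \<forall>t. \<bar>t\<bar> < d \<longrightarrow> \<gamma> w t \<in> U" for w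
  proof -
    obtain r where r: "r > 0" "ball \<xi>0 r \<subseteq> U" using U(1) xiU open_contains_ball by blast
    have "isCont (\<gamma> w) 0" unfolding \<gamma>_def by (intro continuous_intros)
    then obtain d where d: "d > 0" "\<forall>t. dist t 0 < d \<longrightarrow> dist (\<gamma> w t) (\<gamma> w 0) < r"
      using r(1) unfolding continuous_at_eps_delta by blast
    have "\<gamma> w t \<in> U" if "\<bar>t\<bar> < d" for t
    proof -
      have "dist (\<gamma> w t) \<xi>0 < r" using d(2) that gam0[of w] by simp
      then show ?thesis using r(2) by (auto simp: dist_commute)
    qed
    then show ?thesis using d(1) by blast
  qed
  define f where "f w t = g (\<gamma> w t)" for w t
  define f' where "f' w t = G (\<gamma> w t) \<bullet> (- sin t *\<^sub>R nu + cos t *\<^sub>R w)" for w t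
  have df: "DERIV (f w) t :> f' w t" if "\<gamma> w t \<in> U" for w t
    unfolding f_def f'_def using curve_deriv[OF dg[OF that] gvd[of w t]] .
  have df'0: "DERIV (f' w) 0 :> (D2h \<xi>0 w \<bullet> w - G \<xi>0 \<bullet> nu)" for w
  proof -
    have a: "((\<lambda>t. G (\<gamma> w t)) has_vector_derivative D2h \<xi>0 (- sin 0 *\<^sub>R nu + cos 0 *\<^sub>R w)) (at 0)"
      using curve_vderiv[OF dG[OF xiU[folded gam0[of w]]] gvd[of w 0]] gam0 by simp
    have "DERIV (f' w) 0 :> (G (\<gamma> w 0) \<bullet> (- cos 0 *\<^sub>R nu - sin 0 *\<^sub>R w) + D2h \<xi>0 (- sin 0 *\<^sub>R nu + cos 0 *\<^sub>R w) \<bullet> (- sin 0 *\<^sub>R nu + cos 0 *\<^sub>R w))"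
      unfolding f'_def by (rule inner_vd[OF a circ'_vd])
    then show ?thesis using gam0 by (simp add: inner_commute)
  qed
  have f'0: "f' w 0 = G \<xi>0 \<bullet> w" for w unfolding f'_def using gam0 by simp
  have f0: "f w 0 = 0" for w unfolding f_def using gam0 g0 by simp
  define adm where "adm w \<longleftrightarrow> (\<exists>d>0. \<forall>t. 0 < t \<and> t < d \<longrightarrow> snd (\<gamma> w t) \<ge> 0)" for w
  have FO: "G \<xi>0 \<bullet> w \<le> 0" if W: "w \<bullet> nu = 0" "norm w = 1" "adm w" for w
  proof -
    obtain d where d: "d > 0" "\<forall>t. 0 < t \<and> t < d \<longrightarrow> snd (\<gamma> w t) \<ge> 0" using W(3) unfolding adm_def by blast
    have "DERIV (f w) 0 :> f' w 0" using df[of w 0] gam0 xiU by simp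
    moreover have "\<forall>t. 0 < t \<and> t < d \<longrightarrow> f w t \<le> f w 0"
      using d incap[OF W(1,2)] gle f0 unfolding f_def by auto
    ultimately show ?thesis using first_order[OF _ d(1)] f'0 by metis
  qed
  have SO: "Q w \<le> 0" if W: "w \<bullet> nu = 0" "norm w = 1" "adm w" "G \<xi>0 \<bullet> w = 0" for w
  proof -
    obtain d where d: "d > 0" "\<forall>t. 0 < t \<and> t < d \<longrightarrow> snd (\<gamma> w t) \<ge> 0" using W(3) unfolding adm_def by blast
    obtain d2 where d2: "d2 > 0" "\<forall>t. \<bar>t\<bar> < d2 \<longrightarrow> \<gamma> w t \<in> U" using nearU by blast
    define e where "e = min d d2"
    have e: "e > 0" unfolding e_def using d d2 by simp
    have "D2h \<xi>0 w \<bullet> w - G \<xi>0 \<bullet> nu \<le> 0"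
    proof (rule second_order[OF e, of "f w" "f' w"])
      show "\<forall>t. \<bar>t\<bar> < e \<longrightarrow> DERIV (f w) t :> f' w t" using df d2 unfolding e_def by auto
      show "DERIV (f' w) 0 :> (D2h \<xi>0 w \<bullet> w - G \<xi>0 \<bullet> nu)" by (rule df'0)
      show "f' w 0 = 0" using f'0 W(4) by simp
      show "\<forall>t. 0 < t \<and> t < e \<longrightarrow> f w t \<le> f w 0"
        using d incap[OF W(1,2)] gle f0 unfolding f_def e_def by auto
    qed
    moreover have "w \<bullet> w = 1" using W(2) by (simp add: dot_square_norm)
    ultimately show ?thesis unfolding Q_def by simp
  qed
  have vnu: "v \<bullet> nu = 0" using v(1) unfolding nu_def .
  have Qv: "Q v \<le> 0"
  proof -
    have Qhom: "Q (s *\<^sub>R w) = s^2 * Q w" for s w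
      unfolding Q_def by (simp add: linear_scale[OF linD] power2_eq_square algebra_simps)
    have Qneg: "Q (- w) = Q w" for w using Qhom[of "-1" w] by simp
    have sndg: "snd (\<gamma> w t) = snd cc + cos t * snd nu + sin t * snd w" for w t
      unfolding \<gamma>_def by simp
    have sndxi: "snd \<xi>0 = snd cc + snd nu" unfolding nu_def' by simp
    have unit: "(y /\<^sub>R norm y) \<bullet> nu = 0" "norm (y /\<^sub>R norm y) = 1" if "y \<bullet> nu = 0" "y \<noteq> 0" for y
      using that by auto
    have sxi: "snd \<xi>0 \<ge> 0" using xi0 unfolding cap_def by simp
    show ?thesis
    proof (cases "snd \<xi>0 > 0")
      case True
      have admall: "adm w" for w
      proof -
        have "isCont (\<lambda>t. snd cc + cos t * snd nu + sin t * snd w) 0" by (intro continuous_intros)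
        then obtain d where d: "d > 0" "\<forall>t. dist t 0 < d \<longrightarrow>
            dist (snd cc + cos t * snd nu + sin t * snd w) (snd cc + cos 0 * snd nu + sin 0 * snd w) < snd \<xi>0"
          using True unfolding continuous_at_eps_delta by blast
        have "snd (\<gamma> w t) \<ge> 0" if "0 < t" "t < d" for t
          using d(2)[rule_format, of t] that sndxi unfolding sndg by (auto simp: dist_real_def)
        then show ?thesis unfolding adm_def using d(1) by blast
      qed
      have "G \<xi>0 \<bullet> v \<le> 0" using FO[OF vnu v(2) admall] .
      moreover have "G \<xi>0 \<bullet> (- v) \<le> 0" using FO[of "-v"] vnu v(2) admall by simp
      ultimately have "G \<xi>0 \<bullet> v = 0" by simp
      then show ?thesis using SO[OF vnu v(2) admall] by simp
    next
      case False
      then have s0: "snd \<xi>0 = 0" using sxi by simp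
      have sin0: "sin \<theta> > 0" using th by (simp add: sin_gt_zero)
      have sndcc: "snd cc = - cos \<theta>" unfolding cc_def eN_def by simp
      have sndnu: "snd nu = cos \<theta>" using sndxi s0 sndcc by simp
      have nueN: "nu \<bullet> eN = - cos \<theta>" using sndnu by (simp add: inner_eN)
      have admpos: "adm w" if sw: "snd w > 0" for w
      proof -
        have "DERIV (\<lambda>t. snd cc + cos t * snd nu + sin t * snd w) 0 :> (- sin 0 * snd nu + cos 0 * snd w)"
          by (auto intro!: derivative_eq_intros)
        then have "DERIV (\<lambda>t. snd cc + cos t * snd nu + sin t * snd w) 0 :> snd w" by simp
        then obtain d where d: "d > 0" "\<forall>h>0. h < d \<longrightarrow> snd cc + cos 0 * snd nu + sin 0 * snd w
            < snd cc + cos (0 + h) * snd nu + sin (0 + h) * snd w"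
          using DERIV_pos_inc_right[OF _ sw] by blast
        have "snd (\<gamma> w t) \<ge> 0" if "0 < t" "t < d" for t
          using d(2)[rule_format, of t] that sndxi s0 unfolding sndg by simp
        then show ?thesis unfolding adm_def using d(1) by blast
      qed
      define w0 where "w0 = eN - (eN \<bullet> nu) *\<^sub>R nu"
      have w0nu: "w0 \<bullet> nu = 0" unfolding w0_def using nunu by (simp add: inner_diff_left)
      have w0eN: "w0 \<bullet> eN = (sin \<theta>)^2"
      proof -
        have "w0 \<bullet> eN = 1 - (cos \<theta>)^2" unfolding w0_def using nueN eN_eN
          by (simp add: inner_diff_left inner_add_right inner_commute power2_eq_square)
        then show ?thesis by (simp add: sin_squared_eq)
      qed
      have w0w0: "w0 \<bullet> w0 = (sin \<theta>)^2"
      proof -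
        have "w0 \<bullet> w0 = w0 \<bullet> eN - (eN \<bullet> nu) * (w0 \<bullet> nu)"
          by (subst (2) w0_def) (simp add: inner_diff_right)
        then show ?thesis using w0eN w0nu by simp
      qed
      have nw0: "norm w0 = sin \<theta>" using w0w0 sin0 by (simp add: norm_eq_sqrt_inner)
      have sndw0: "snd w0 = - ((sin \<theta>)^2)" using w0eN by (simp add: inner_eN)
      have tang: "y \<bullet> w0 = - snd y" if "y \<bullet> nu = 0" for y
      proof -
        show ?thesis unfolding w0_def using that inner_eN[of y] by (simp add: inner_diff_right)
      qed
      have conw: "conormal \<theta> \<xi>0 = w0 /\<^sub>R sin \<theta>"
        unfolding conormal_def Let_def nu_def[symmetric] w0_def[symmetric] nw0 ..
      have xib: "\<xi>0 \<in> cap_boundary \<theta>" unfolding cap_boundary_def using xi0 s0 by simp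
      have "Dh \<xi>0 \<bullet> (w0 /\<^sub>R sin \<theta>) = cot \<theta> * h \<xi>0" using bdry xib conw by auto
      then have Dhw0: "Dh \<xi>0 \<bullet> w0 = cos \<theta> * h \<xi>0" using sin0 by (simp add: cot_def field_simps)
      have hxi0: "h \<xi>0 = a * (sin \<theta>)^2" using eq0 s0 unfolding ell_def by (simp add: inner_eN)
      have Gw0: "G \<xi>0 \<bullet> w0 = 0"
      proof -
        have "G \<xi>0 \<bullet> w0 = Dh \<xi>0 \<bullet> w0 - (a * cos \<theta>) * (eN \<bullet> w0)" unfolding G_def by (simp add: inner_diff_left)
        also have "\<dots> = 0" using Dhw0 hxi0 w0eN by (simp add: inner_commute)
        finally show ?thesis .
      qed
      have Gpos: "G \<xi>0 \<bullet> y \<le> 0" if "y \<bullet> nu = 0" "snd y > 0" for y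
      proof -
        have y0: "y \<noteq> 0" using that by auto
        have "snd (y /\<^sub>R norm y) > 0" using that y0 by simp
        then have "G \<xi>0 \<bullet> (y /\<^sub>R norm y) \<le> 0" using FO[OF unit[OF that(1) y0] admpos] by blast
        then have "inverse (norm y) * (G \<xi>0 \<bullet> y) \<le> 0" by simp
        moreover have "inverse (norm y) > 0" using y0 by simp
        ultimately show ?thesis by (simp add: mult_le_0_iff)
      qed
      have G0: "G \<xi>0 \<bullet> z = 0" if "z \<bullet> nu = 0" for z
      proof -
        define s where "s = (z \<bullet> w0) / (w0 \<bullet> w0)"
        define z' where "z' = z - s *\<^sub>R w0"
        have z'nu: "z' \<bullet> nu = 0" unfolding z'_def using that w0nu by (simp add: inner_diff_left)
        have "z' \<bullet> w0 = 0" unfolding z'_def s_def using w0w0 sin0 by (simp add: inner_diff_left)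
        then have sz': "snd z' = 0" using tang[OF z'nu] by simp
        have "G \<xi>0 \<bullet> (z' - w0) \<le> 0"
          using Gpos[of "z' - w0"] z'nu w0nu sz' sndw0 sin0 by (simp add: inner_diff_left)
        moreover have "G \<xi>0 \<bullet> (- z' - w0) \<le> 0"
          using Gpos[of "- z' - w0"] z'nu w0nu sz' sndw0 sin0 by (simp add: inner_diff_left)
        ultimately have "G \<xi>0 \<bullet> z' = 0" using Gw0 by (simp add: inner_diff_right)
        moreover have "G \<xi>0 \<bullet> z = G \<xi>0 \<bullet> z' + s * (G \<xi>0 \<bullet> w0)" unfolding z'_def by (simp add: inner_diff_right)
        ultimately show ?thesis using Gw0 by simp
      qed
      have Qpos: "Q y \<le> 0" if "y \<bullet> nu = 0" "snd y > 0" for y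
      proof -
        have y0: "y \<noteq> 0" using that by auto
        have "snd (y /\<^sub>R norm y) > 0" using that y0 by simp
        then have "Q (y /\<^sub>R norm y) \<le> 0"
          using SO[OF unit[OF that(1) y0] admpos] G0[OF unit(1)[OF that(1) y0]] by blast
        moreover have "Q y = (norm y)^2 * Q (y /\<^sub>R norm y)"
          using Qhom[of "norm y" "y /\<^sub>R norm y"] y0 by simp
        ultimately show ?thesis by (simp add: mult_nonneg_nonpos)
      qed
      consider "snd v > 0" | "snd v < 0" | "snd v = 0" by linarith
      then show ?thesis
      proof cases
        case 1 then show ?thesis using Qpos vnu by blast
      next
        case 2 then show ?thesis using Qpos[of "-v"] vnu Qneg by simp
      next
        case 3
        define B where "B = D2h \<xi>0 v \<bullet> w0 + D2h \<xi>0 w0 \<bullet> v - 2 * (G \<xi>0 \<bullet> nu) * (v \<bullet> w0)"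
        have expand: "Q (v - e *\<^sub>R w0) = Q v - e * B + e^2 * Q w0" for e
          unfolding Q_def B_def
          by (simp add: linear_diff[OF linD] linear_scale[OF linD] inner_diff_left inner_diff_right
              inner_commute power2_eq_square algebra_simps)
        have "Q v \<le> e * B + e^2 * (- Q w0)" if "0 < e" "e \<le> 1" for e
        proof -
          have "(v - e *\<^sub>R w0) \<bullet> nu = 0" using vnu w0nu by (simp add: inner_diff_left)
          moreover have "snd (v - e *\<^sub>R w0) > 0" using 3 sndw0 that sin0 by simp
          ultimately have "Q (v - e *\<^sub>R w0) \<le> 0" using Qpos by blast
          then show ?thesis unfolding expand by simp
        qed
        then show ?thesis using small_eps by blast
      qed
    qed
  qed
  have "Wform \<theta> h Dh D2h \<xi>0 v v = a + Q v" using WQ[of v] v(2) by (simp add: dot_square_norm)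
  then show ?thesis using Qv by simp
qed

lemma neg_Wform:
  "Wform \<theta> (\<lambda>x. - h x) (\<lambda>x. - Dh x) (\<lambda>x v. - D2h x v) \<xi> X Y = - Wform \<theta> h Dh D2h \<xi> X Y"
  unfolding Wform_def by (simp add: algebra_simps)

lemma pow_gt1:
  fixes x a b :: real
  assumes "x > 1" "a < b" shows "x powr a < x powr b"
  using powr_less_mono[OF assms(2,1)] .

lemma pow_lt1:
  fixes x a b :: real
  assumes "0 < x" "x < 1" "a < b" shows "x powr b < x powr a"
proof -
  have "ln x < 0" using assms by simp
  then have "b * ln x < a * ln x" using assms(3) by (simp add: mult_strict_right_mono_neg)
  then show ?thesis using assms(1) by (simp add: powr_def)
qed

theorem corollary5p2:
  fixes \<theta> p :: real and k l :: nat
    and h :: "(real^'n::finite) \<times> real \<Rightarrow> real"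
    and Dh :: "(real^'n) \<times> real \<Rightarrow> (real^'n) \<times> real"
    and D2h :: "(real^'n) \<times> real \<Rightarrow> (real^'n) \<times> real \<Rightarrow> (real^'n) \<times> real"
    and U :: "((real^'n) \<times> real) set"
  assumes n2: "CARD('n) \<ge> 2"
    and lk: "l < k" and kn: "k \<le> CARD('n)"
    and th: "0 < \<theta>" "\<theta> < pi"
    and p: "p > real k - real l + 1"
    and U: "open U" "cap \<theta> \<subseteq> U"
    and D1: "\<forall>x\<in>U. (h has_derivative (\<lambda>v. Dh x \<bullet> v)) (at x)"
    and D2: "\<forall>x\<in>U. (Dh has_derivative D2h x) (at x)"
    and D2c: "\<forall>v. continuous_on U (\<lambda>x. D2h x v)"
    and hpos: "\<forall>\<xi>\<in>cap \<theta>. h \<xi> > 0"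
    and adm: "\<forall>\<xi>\<in>cap \<theta>. \<forall>lam b. is_eigendecomp \<theta> h Dh D2h \<xi> lam b \<longrightarrow> lam \<in> Gamma k"
    and eq: "\<forall>\<xi>\<in>cap \<theta>. \<forall>lam b. is_eigendecomp \<theta> h Dh D2h \<xi> lam b \<longrightarrow>
               sigma k lam / sigma l lam =
               (real (CARD('n) choose k) / real (CARD('n) choose l)) * (h \<xi> / ell \<theta> \<xi>) powr (p - 1)"
    and bdry: "\<forall>\<xi>\<in>cap_boundary \<theta>. Dh \<xi> \<bullet> conormal \<theta> \<xi> = cot \<theta> * h \<xi>"
  shows "\<forall>\<xi>\<in>cap \<theta>. h \<xi> = ell \<theta> \<xi>"
proof -
  define n where "n = CARD('n)"
  define cc :: "'n pt" where "cc = cos \<theta> *\<^sub>R eN"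
  have sin0: "sin \<theta> > 0" using th by (simp add: sin_gt_zero)
  have cos1: "\<bar>cos \<theta>\<bar> < 1"
  proof -
    have "(sin \<theta>)^2 > 0" using sin0 by simp
    then have "(cos \<theta>)^2 < 1" using sin_squared_eq[of \<theta>] by linarith
    then show ?thesis by (simp add: abs_square_less_1)
  qed
  have ellpos: "ell \<theta> \<xi> > 0" if "\<xi> \<in> cap \<theta>" for \<xi> :: "'n pt"
  proof -
    have nn: "norm (\<xi> - cc) = 1" using that unfolding cap_def cc_def by simp
    have "\<bar>(\<xi> - cc) \<bullet> eN\<bar> \<le> 1" using Cauchy_Schwarz_ineq2[of "\<xi> - cc" eN] nn by (simp add: eN_def)
    moreover have "ell \<theta> \<xi> = 1 + cos \<theta> * ((\<xi> - cc) \<bullet> eN)"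
    proof -
      have "\<xi> \<bullet> eN = (\<xi> - cc) \<bullet> eN + cos \<theta>" unfolding cc_def by (simp add: inner_diff_left eN_eN)
      then have "ell \<theta> \<xi> = (sin \<theta>)^2 + (cos \<theta>)^2 + cos \<theta> * ((\<xi> - cc) \<bullet> eN)"
        unfolding ell_def by (simp add: algebra_simps power2_eq_square)
      then show ?thesis by simp
    qed
    moreover have "\<bar>cos \<theta> * ((\<xi> - cc) \<bullet> eN)\<bar> < 1"
    proof -
      have "\<bar>cos \<theta>\<bar> * \<bar>(\<xi> - cc) \<bullet> eN\<bar> \<le> \<bar>cos \<theta>\<bar> * 1"
        using calculation(1) by (intro mult_left_mono) auto
      then show ?thesis using cos1 by (simp add: abs_mult)
    qed
    ultimately show ?thesis by linarith
  qed
  define u where "u \<xi> = h \<xi> / ell \<theta> \<xi>" for \<xi>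
  have capeq: "(cap \<theta> :: 'n pt set) = sphere cc 1 \<inter> {\<xi>. snd \<xi> \<ge> 0}"
    unfolding cap_def cc_def by (auto simp: dist_norm norm_minus_commute)
  have ccap: "compact (cap \<theta> :: 'n pt set)" unfolding capeq
    by (intro compact_Int_closed compact_sphere closed_Collect_le continuous_on_const continuous_on_snd continuous_on_id)
  have hcont: "continuous_on (cap \<theta>) h"
  proof (rule continuous_at_imp_continuous_on, rule ballI)
    fix x :: "'n pt" assume "x \<in> cap \<theta>"
    then have "x \<in> U" using U by auto
    then show "isCont h x" using D1 has_derivative_continuous by blast
  qed
  have ellcont: "continuous_on (cap \<theta>) (ell \<theta>)" unfolding ell_def[abs_def] by (intro continuous_intros)
  have ell0: "\<forall>x\<in>(cap \<theta> :: 'n pt set). ell \<theta> x \<noteq> 0"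
  proof
    fix x :: "'n pt" assume "x \<in> cap \<theta>"
    then show "ell \<theta> x \<noteq> 0" using ellpos[of x] by simp
  qed
  have ucont: "continuous_on (cap \<theta>) u" unfolding u_def
    by (rule continuous_on_divide[OF hcont ellcont ell0])
  show ?thesis
  proof (cases "(cap \<theta> :: 'n pt set) = {}")
    case True then show ?thesis by simp
  next
    case ne: False
    obtain xM where xM: "xM \<in> cap \<theta>" "\<forall>y\<in>cap \<theta>. u y \<le> u xM"
      using continuous_attains_sup[OF ccap ne ucont] by blast
    obtain xm where xm: "xm \<in> cap \<theta>" "\<forall>y\<in>cap \<theta>. u xm \<le> u y"
      using continuous_attains_inf[OF ccap ne ucont] by blast
    have upos: "u y > 0" if "y \<in> cap \<theta>" for y unfolding u_def using hpos ellpos that by simp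
    have Cpos: "real (n choose j) > 0" if "j \<le> k" for j using that kn unfolding n_def by simp
    have nzM: "cap_normal \<theta> \<xi> \<noteq> 0" if "\<xi> \<in> cap \<theta>" for \<xi> :: "'n pt"
      using that unfolding cap_def cap_normal_def by auto
    have sigl: "sigma l lam > 0" if "lam \<in> Gamma k" for lam :: "'n \<Rightarrow> real"
      using that lk sigma_0[of lam] unfolding Gamma_def by (cases "l = 0") auto
    define aM where "aM = u xM"
    have aMpos: "aM > 0" unfolding aM_def using upos xM by simp
    have aM1: "aM \<le> 1"
    proof -
      obtain lam b where eig: "is_eigendecomp \<theta> h Dh D2h xM lam b"
        using eig_exists[OF U(1) D1 D2 D2c _ nzM[OF xM(1)]] xM U by blast
      have G: "lam \<in> Gamma k" using adm xM eig by blast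
      have le: "\<forall>\<xi>\<in>cap \<theta>. h \<xi> \<le> aM * ell \<theta> \<xi>"
      proof
        fix \<xi> :: "'n pt" assume x: "\<xi> \<in> cap \<theta>"
        have "h \<xi> / ell \<theta> \<xi> \<le> aM" using xM x unfolding aM_def u_def by blast
        then show "h \<xi> \<le> aM * ell \<theta> \<xi>" using ellpos[OF x] by (simp add: pos_divide_le_eq)
      qed
      have eq0: "h xM = aM * ell \<theta> xM" unfolding aM_def u_def using ellpos[OF xM(1)] by simp
      have lamle: "\<forall>i. lam i \<le> aM"
      proof
        fix i
        have bi: "b i \<bullet> cap_normal \<theta> xM = 0" "norm (b i) = 1" "b i \<bullet> b i = 1"
          using eig unfolding is_eigendecomp_def by (auto simp: norm_eq_1)
        have "\<forall>Y. Y \<bullet> cap_normal \<theta> xM = 0 \<longrightarrow> Wform \<theta> h Dh D2h xM (b i) Y = lam i * (b i \<bullet> Y)"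
          using eig unfolding is_eigendecomp_def by blast
        then have "Wform \<theta> h Dh D2h xM (b i) (b i) = lam i * (b i \<bullet> b i)" using bi(1) by blast
        then have "Wform \<theta> h Dh D2h xM (b i) (b i) = lam i" using bi(3) by simp
        moreover have "Wform \<theta> h Dh D2h xM (b i) (b i) \<le> aM"
          by (rule max_bound[OF U D1 D2 th bdry xM(1) le eq0 bi(1,2)])
        ultimately show "lam i \<le> aM" by simp
      qed
      have pos: "\<forall>j\<in>{1..k}. sigma j lam > 0" using G unfolding Gamma_def by blast
      have B: "real (n choose l) * sigma k lam \<le> real (n choose k) * aM^(k - l) * sigma l lam"
        using claimB[OF kn _ pos lamle aMpos] lk unfolding n_def by simp
      have E: "sigma k lam / sigma l lam = (real (n choose k) / real (n choose l)) * aM powr (p - 1)"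
        using eq xM eig unfolding n_def aM_def u_def by blast
      have sl: "sigma l lam > 0" using sigl[OF G] .
      have "sigma k lam = (real (n choose k) / real (n choose l)) * aM powr (p - 1) * sigma l lam"
        using E sl by (simp add: field_simps)
      then have "real (n choose k) * aM powr (p - 1) * sigma l lam \<le> real (n choose k) * aM^(k - l) * sigma l lam"
        using B Cpos[of l] lk by (simp add: field_simps)
      then have A: "aM powr (p - 1) \<le> aM^(k - l)" using Cpos[of k] sl by (simp add: mult_le_cancel_right_pos)
      show ?thesis
      proof (rule ccontr)
        assume "\<not> aM \<le> 1"
        then have "aM > 1" by simp
        moreover have "real (k - l) < p - 1" using p lk by (simp add: of_nat_diff)
        ultimately have "aM powr real (k - l) < aM powr (p - 1)" by (rule pow_gt1)
        then show False using A aMpos by (simp add: powr_realpow)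
      qed
    qed
    define am where "am = u xm"
    have ampos: "am > 0" unfolding am_def using upos xm by simp
    have am1: "am \<ge> 1"
    proof -
      obtain lam b where eig: "is_eigendecomp \<theta> h Dh D2h xm lam b"
        using eig_exists[OF U(1) D1 D2 D2c _ nzM[OF xm(1)]] xm U by blast
      have G: "lam \<in> Gamma k" using adm xm eig by blast
      have D1': "\<forall>x\<in>U. ((\<lambda>x. - h x) has_derivative (\<lambda>v. (- Dh x) \<bullet> v)) (at x)"
        using D1 by (auto dest: has_derivative_minus)
      have D2': "\<forall>x\<in>U. ((\<lambda>x. - Dh x) has_derivative (\<lambda>v. - D2h x v)) (at x)"
        using D2 by (auto dest: has_derivative_minus)
      have bdry': "\<forall>\<xi>\<in>cap_boundary \<theta>. (- Dh \<xi>) \<bullet> conormal \<theta> \<xi> = cot \<theta> * (- h \<xi>)"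
        using bdry by simp
      have le: "\<forall>\<xi>\<in>cap \<theta>. - h \<xi> \<le> (- am) * ell \<theta> \<xi>"
      proof
        fix \<xi> :: "'n pt" assume x: "\<xi> \<in> cap \<theta>"
        have "am \<le> h \<xi> / ell \<theta> \<xi>" using xm x unfolding am_def u_def by blast
        then show "- h \<xi> \<le> (- am) * ell \<theta> \<xi>" using ellpos[OF x] by (simp add: pos_le_divide_eq)
      qed
      have eq0: "- h xm = (- am) * ell \<theta> xm" unfolding am_def u_def using ellpos[OF xm(1)] by simp
      have lamge: "\<forall>i. lam i \<ge> am"
      proof
        fix i
        have bi: "b i \<bullet> cap_normal \<theta> xm = 0" "norm (b i) = 1" "b i \<bullet> b i = 1"
          using eig unfolding is_eigendecomp_def by (auto simp: norm_eq_1)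
        have "\<forall>Y. Y \<bullet> cap_normal \<theta> xm = 0 \<longrightarrow> Wform \<theta> h Dh D2h xm (b i) Y = lam i * (b i \<bullet> Y)"
          using eig unfolding is_eigendecomp_def by blast
        then have "Wform \<theta> h Dh D2h xm (b i) (b i) = lam i * (b i \<bullet> b i)" using bi(1) by blast
        then have "Wform \<theta> h Dh D2h xm (b i) (b i) = lam i" using bi(3) by simp
        moreover have "Wform \<theta> (\<lambda>x. - h x) (\<lambda>x. - Dh x) (\<lambda>x v. - D2h x v) xm (b i) (b i) \<le> - am"
          by (rule max_bound[OF U D1' D2' th bdry' xm(1) le eq0 bi(1,2)])
        ultimately show "am \<le> lam i" unfolding neg_Wform by simp
      qed
      have A: "real (n choose k) * am^(k - l) * sigma l lam \<le> real (n choose l) * sigma k lam"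
        using claimA[OF kn _ lamge ampos] lk unfolding n_def by simp
      have E: "sigma k lam / sigma l lam = (real (n choose k) / real (n choose l)) * am powr (p - 1)"
        using eq xm eig unfolding n_def am_def u_def by blast
      have sl: "sigma l lam > 0" using sigl[OF G] .
      have "sigma k lam = (real (n choose k) / real (n choose l)) * am powr (p - 1) * sigma l lam"
        using E sl by (simp add: field_simps)
      then have "real (n choose k) * am^(k - l) * sigma l lam \<le> real (n choose k) * am powr (p - 1) * sigma l lam"
        using A Cpos[of l] lk by (simp add: field_simps)
      then have A2: "am^(k - l) \<le> am powr (p - 1)" using Cpos[of k] sl by (simp add: mult_le_cancel_right_pos)
      show ?thesis
      proof (rule ccontr)
        assume "\<not> am \<ge> 1"
        then have "am < 1" by simp
        moreover have "real (k - l) < p - 1" using p lk by (simp add: of_nat_diff)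
        ultimately have "am powr (p - 1) < am powr real (k - l)" using pow_lt1 ampos by blast
        then show False using A2 ampos by (simp add: powr_realpow)
      qed
    qed
    show ?thesis
    proof
      fix \<xi> :: "'n pt" assume x: "\<xi> \<in> cap \<theta>"
      have "u \<xi> \<le> aM" "am \<le> u \<xi>" using xM xm x unfolding aM_def am_def by auto
      then have "u \<xi> = 1" using aM1 am1 by simp
      then show "h \<xi> = ell \<theta> \<xi>" unfolding u_def using ellpos[OF x] by simp
    qed
  qed
qed

end
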